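(* For any Kelvin-Planck theory $(\Sigma,\mathscr{P})$, the set of Clausius-Duhem temperature scales is dense, in the sup-norm topology of $C(\Sigma,\mathbb{R})$, in the set of strong Clausius temperature scales.
   Context: $\Sigma$ is a compact Hausdorff space. $\mathscr{M}(\Sigma)$ is the vector space of regular signed Borel measures on $\Sigma$ with its weak-star topology; $\mathscr{M}_+(\Sigma)$ the nonnegative members; $\mathscr{M}^\circ(\Sigma)=\{\mu:\mu(\Sigma)=0\}$; $\mathscr{V}(\Sigma)=\mathscr{M}^\circ(\Sigma)\oplus\mathscr{M}(\Sigma)$ with the product topology. For $\mathscr{P}\subset\mathscr{V}(\Sigma)$, $\hat{\mathscr{P}}$ is the closure of the set of nonnegative multiples of members of $\mathscr{P}$. A thermodynamical theory is $(\Sigma,\mathscr{P})$ with $\hat{\mathscr{P}}$ convex; it is Kelvin-Planck if $\hat{\mathscr{P}}\cap\{(0,\nu):\nu\in\mathscr{M}_+(\Sigma)\}=\{(0,0)\}$. A Clausius-Duhem temperature scale is $T\in C(\Sigma,(0,\infty))$ for which some $\eta\in C(\Sigma,\mathbb{R})$ satisfies $\int_\Sigma\eta\,d(\Delta\mathscr{m})\ge\int_\Sigma\frac{d\mathscr{q}}{T}$ for all $(\Delta\mathscr{m},\mathscr{q})\in\mathscr{P}$. A strong Clausius temperature scale is a continuous $T:\Sigma\to(0,\infty)$ with $0\ge\int_\Sigma\frac{d\mathscr{q}}{T}$ for every $\mathscr{q}\in\mathscr{M}(\Sigma)$ such that $(0,\mathscr{q})\in\hat{\mathscr{P}}$. 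*)

theory Defs
  imports "HOL-Probability.Probability"
begin

text \<open>A regular signed Borel measure on the compact Hausdorff space (the type 'a with
compact UNIV) is represented as a pair (M1, M2) of finite, regular, nonnegative Borel
measures, standing for the signed measure M1 - M2 (Jordan decomposition).  All notions
below depend only on the represented signed measure.\<close>

type_synonym 'a sm = "'a measure \<times> 'a measure"
type_synonym 'a vp = "'a sm \<times> 'a sm"

definition regular_fin_borel :: "('a::topological_space) measure \<Rightarrow> bool" where
  "regular_fin_borel M \<longleftrightarrow> sets M = sets borel \<and> finite_measure M \<and>
     (\<forall>A\<in>sets borel.
        emeasure M A = (SUP K\<in>{K. compact K \<and> K \<subseteq> A}. emeasure M K) \<and>
        emeasure M A = (INF U\<in>{U. open U \<and> A \<subseteq> U}. emeasure M U))"

definition rsm :: "('a::topological_space) sm \<Rightarrow> bool" where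
  "rsm \<mu> \<longleftrightarrow> regular_fin_borel (fst \<mu>) \<and> regular_fin_borel (snd \<mu>)"

definition sval :: "('a::topological_space) sm \<Rightarrow> 'a set \<Rightarrow> real" where
  "sval \<mu> A = measure (fst \<mu>) A - measure (snd \<mu>) A"

definition sint :: "('a::topological_space) sm \<Rightarrow> ('a \<Rightarrow> real) \<Rightarrow> real" where
  "sint \<mu> f = (integral\<^sup>L (fst \<mu>) f) - (integral\<^sup>L (snd \<mu>) f)"

definition inV :: "('a::topological_space) vp \<Rightarrow> bool" where
  "inV x \<longleftrightarrow> rsm (fst x) \<and> rsm (snd x) \<and> sval (fst x) UNIV = 0"

text \<open>x belongs to hat P: the closure, in the product weak-star topology of V(Sigma),
of the nonnegative multiples of members of P.  Basic weak-star neighbourhoods of x are given by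
finitely many continuous functions and a tolerance epsilon.\<close>
definition in_hat :: "('a::topological_space) vp set \<Rightarrow> 'a vp \<Rightarrow> bool" where
  "in_hat P x \<longleftrightarrow> inV x \<and>
     (\<forall>F \<epsilon>. finite F \<longrightarrow> (\<forall>f\<in>F. continuous_on UNIV f) \<longrightarrow> \<epsilon> > 0 \<longrightarrow>
        (\<exists>c::real. c \<ge> 0 \<and> (\<exists>p\<in>P. \<forall>f\<in>F.
            \<bar>c * sint (fst p) f - sint (fst x) f\<bar> < \<epsilon> \<and>
            \<bar>c * sint (snd p) f - sint (snd x) f\<bar> < \<epsilon>)))"

definition thermo_theory :: "('a::topological_space) vp set \<Rightarrow> bool" where
  "thermo_theory P \<longleftrightarrow> (\<forall>p\<in>P. inV p) \<and>
     (\<forall>x y z t. in_hat P x \<longrightarrow> in_hat P y \<longrightarrow> inV z \<longrightarrow> 0 \<le> t \<longrightarrow> t \<le> (1::real) \<longrightarrow>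
        (\<forall>A\<in>sets borel. sval (fst z) A = t * sval (fst x) A + (1 - t) * sval (fst y) A
                      \<and> sval (snd z) A = t * sval (snd x) A + (1 - t) * sval (snd y) A) \<longrightarrow>
        in_hat P z)"

definition kelvin_planck :: "('a::topological_space) vp set \<Rightarrow> bool" where
  "kelvin_planck P \<longleftrightarrow> thermo_theory P \<and>
     (\<exists>x. in_hat P x \<and> (\<forall>A\<in>sets borel. sval (fst x) A = 0 \<and> sval (snd x) A = 0)) \<and>
     (\<forall>x. in_hat P x \<longrightarrow> (\<forall>A\<in>sets borel. sval (fst x) A = 0) \<longrightarrow>
          (\<forall>A\<in>sets borel. sval (snd x) A \<ge> 0) \<longrightarrow>
          (\<forall>A\<in>sets borel. sval (snd x) A = 0))"

definition clausius_duhem :: "('a::topological_space) vp set \<Rightarrow> ('a \<Rightarrow> real) \<Rightarrow> bool" where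
  "clausius_duhem P T \<longleftrightarrow> continuous_on UNIV T \<and> (\<forall>s. T s > 0) \<and>
     (\<exists>\<eta>. continuous_on UNIV \<eta> \<and>
        (\<forall>p\<in>P. sint (fst p) \<eta> \<ge> sint (snd p) (\<lambda>s. 1 / T s)))"

definition strong_clausius :: "('a::topological_space) vp set \<Rightarrow> ('a \<Rightarrow> real) \<Rightarrow> bool" where
  "strong_clausius P T \<longleftrightarrow> continuous_on UNIV T \<and> (\<forall>s. T s > 0) \<and>
     (\<forall>x. in_hat P x \<longrightarrow> (\<forall>A\<in>sets borel. sval (fst x) A = 0) \<longrightarrow>
          sint (snd x) (\<lambda>s. 1 / T s) \<le> 0)"

end

theory Submission
  imports Defs
begin


definition fsubspace :: "('x\<Rightarrow>real) set \<Rightarrow> bool" where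
 "fsubspace V \<longleftrightarrow> (\<forall>f\<in>V. \<forall>g\<in>V. (\<lambda>x. f x + g x) \<in> V) \<and> (\<forall>f\<in>V. \<forall>c. (\<lambda>x. c * f x) \<in> V)"

definition sublin :: "('x\<Rightarrow>real) set \<Rightarrow> (('x\<Rightarrow>real) \<Rightarrow> real) \<Rightarrow> bool" where
 "sublin V p \<longleftrightarrow> (\<forall>f\<in>V. \<forall>g\<in>V. p (\<lambda>x. f x + g x) \<le> p f + p g) \<and>
    (\<forall>f\<in>V. \<forall>c\<ge>0. p (\<lambda>x. c * f x) = c * p f)"

definition hbA where
 "hbA V p z = {G. G \<subseteq> V \<times> UNIV \<and> (z, p z) \<in> G \<and> (\<forall>a r s. (a,r)\<in>G \<longrightarrow> (a,s)\<in>G \<longrightarrow> r = s) \<and>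
    (\<forall>a r b s. (a,r)\<in>G \<longrightarrow> (b,s)\<in>G \<longrightarrow> ((\<lambda>x. a x + b x), r+s) \<in> G) \<and>
    (\<forall>a r c. (a,r)\<in>G \<longrightarrow> ((\<lambda>x. c*a x), c*r)\<in>G) \<and> (\<forall>a r. (a,r)\<in>G \<longrightarrow> r \<le> p a)}"

lemma sublin_neg:
  assumes "sublin V p" "fsubspace V" "z \<in> V" "t < 0"
  shows "t * p z \<le> p (\<lambda>x. t * z x)"
proof -
  have mz: "(\<lambda>x. (-1) * z x) \<in> V" using assms(2,3) unfolding fsubspace_def by blast
  have hom: "\<And>f c. f\<in>V \<Longrightarrow> c \<ge> 0 \<Longrightarrow> p (\<lambda>x. c*f x) = c * p f" using assms(1) unfolding sublin_def by blast
  have "p (\<lambda>x. 0 * z x) = 0 * p z" by (rule hom[OF assms(3)]) simp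
  hence p0: "p (\<lambda>x. 0) = 0" by simp
  have sub: "\<And>f g. f\<in>V \<Longrightarrow> g\<in>V \<Longrightarrow> p (\<lambda>x. f x + g x) \<le> p f + p g" using assms(1) unfolding sublin_def by blast
  have "p (\<lambda>x. z x + (-1) * z x) \<le> p z + p (\<lambda>x. (-1) * z x)"
    by (rule sub[OF assms(3) mz])
  hence A: "0 \<le> p z + p (\<lambda>x. (-1) * z x)" using p0 by simp
  have "p (\<lambda>x. (-t) * ((-1) * z x)) = (-t) * p (\<lambda>x. (-1) * z x)"
    by (rule hom[OF mz]) (use assms(4) in simp)
  hence "p (\<lambda>x. t * z x) = (-t) * p (\<lambda>x. (-1) * z x)" by simp
  moreover have "(-t) * (- p z) \<le> (-t) * p (\<lambda>x. (-1) * z x)"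
    using A assms(4) by (intro mult_left_mono) auto
  ultimately show ?thesis by simp
qed

lemma hb_G0:
  assumes "sublin V p" "fsubspace V" "z \<in> V"
  shows "{((\<lambda>x. t * z x), t * p z) | t. True} \<in> hbA V p z"
proof -
  let ?G = "{((\<lambda>x. t * z x), t * p z) | t. True}"
  have pz0: "p (\<lambda>x. 0) = 0"
  proof -
    have hom: "\<And>f c. f\<in>V \<Longrightarrow> c \<ge> 0 \<Longrightarrow> p (\<lambda>x. c*f x) = c * p f" using assms(1) unfolding sublin_def by blast
    have "p (\<lambda>x. 0 * z x) = 0 * p z" by (rule hom[OF assms(3)]) simp
    thus ?thesis by simp
  qed
  have func: "t * p z = t' * p z" if "(\<lambda>x. t * z x) = (\<lambda>x. t' * z x)" for t t'
  proof (cases "t = t'")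
    case False
    have "\<forall>x. t * z x = t' * z x" using that by metis
    hence "\<forall>x. z x = 0" using False by auto
    hence "z = (\<lambda>x. 0)" by auto
    thus ?thesis using pz0 by simp
  qed simp
  have dom: "t * p z \<le> p (\<lambda>x. t * z x)" for t
  proof (cases "t < 0")
    case True thus ?thesis using sublin_neg[OF assms True] by simp
  next
    case False thus ?thesis using assms(1,3) unfolding sublin_def by auto
  qed
  show ?thesis unfolding hbA_def
  proof (rule CollectI, intro conjI allI impI)
    show "?G \<subseteq> V \<times> UNIV" using assms(2,3) unfolding fsubspace_def by auto
    show "(z, p z) \<in> ?G" by (rule CollectI, rule exI[of _ 1]) simp
  next
  next
    fix a r s assume h1: "(a,r) \<in> ?G" and h2: "(a,s) \<in> ?G"
    obtain t where "a = (\<lambda>x. t * z x)" "r = t * p z" using h1 by blast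
    moreover obtain t' where "a = (\<lambda>x. t' * z x)" "s = t' * p z" using h2 by blast
    ultimately show "r = s" using func by metis
  next
    fix a r b s assume h1: "(a,r) \<in> ?G" and h2: "(b,s) \<in> ?G"
    obtain t where "a = (\<lambda>x. t * z x)" "r = t * p z" using h1 by blast
    moreover obtain t' where "b = (\<lambda>x. t' * z x)" "s = t' * p z" using h2 by blast
    ultimately show "((\<lambda>x. a x + b x), r+s) \<in> ?G"
      by (intro CollectI exI[of _ "t+t'"]) (auto simp: algebra_simps)
  next
    fix a r c assume "(a,r) \<in> ?G"
    then obtain t where "a = (\<lambda>x. t * z x)" "r = t * p z" by auto
    thus "((\<lambda>x. c * a x), c*r) \<in> ?G"
      by (intro CollectI exI[of _ "c*t"]) (auto simp: algebra_simps)
  next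
    fix a r assume "(a,r) \<in> ?G"
    then obtain t where "a = (\<lambda>x. t * z x)" "r = t * p z" by auto
    thus "r \<le> p a" using dom by simp
  qed
qed

lemma hb_chain:
  assumes "C \<in> chains (hbA V p z)" "C \<noteq> {}"
  shows "\<Union>C \<in> hbA V p z"
proof -
  have CA: "C \<subseteq> hbA V p z" using assms(1) chainsD2 by blast
  have tot: "X \<subseteq> Y \<or> Y \<subseteq> X" if "X \<in> C" "Y \<in> C" for X Y using chainsD[OF assms(1) that] .
  have two: "\<exists>G\<in>C. u \<in> G \<and> v \<in> G" if u: "u \<in> \<Union>C" and v: "v \<in> \<Union>C" for u v
  proof -
    obtain X where "X\<in>C" "u\<in>X" using u by blast
    moreover obtain Y where "Y\<in>C" "v\<in>Y" using v by blast
    ultimately show ?thesis using tot by blast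
  qed
  show ?thesis unfolding hbA_def
  proof (rule CollectI, intro conjI allI impI)
    show "\<Union>C \<subseteq> V \<times> UNIV" using CA unfolding hbA_def by blast
    show "(z, p z) \<in> \<Union>C" using CA assms(2) unfolding hbA_def by blast
  next
  next
    fix a r s assume "(a,r) \<in> \<Union>C" "(a,s) \<in> \<Union>C"
    then obtain G where "G\<in>C" "(a,r)\<in>G" "(a,s)\<in>G" using two by blast
    thus "r = s" using CA unfolding hbA_def by blast
  next
    fix a r b s assume "(a,r) \<in> \<Union>C" "(b,s) \<in> \<Union>C"
    then obtain G where "G\<in>C" "(a,r)\<in>G" "(b,s)\<in>G" using two by blast
    hence "((\<lambda>x. a x + b x), r+s) \<in> G" using CA unfolding hbA_def by blast
    thus "((\<lambda>x. a x + b x), r+s) \<in> \<Union>C" using \<open>G\<in>C\<close> by blast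
  next
    fix a r c assume "(a,r) \<in> \<Union>C"
    then obtain G where "G\<in>C" "(a,r)\<in>G" by blast
    hence "((\<lambda>x. c * a x), c*r) \<in> G" using CA unfolding hbA_def by blast
    thus "((\<lambda>x. c * a x), c*r) \<in> \<Union>C" using \<open>G\<in>C\<close> by blast
  next
    fix a r assume "(a,r) \<in> \<Union>C"
    then obtain G where "G\<in>C" "(a,r)\<in>G" by blast
    thus "r \<le> p a" using CA unfolding hbA_def by blast
  qed
qed

lemma fsub_lin:
  assumes "fsubspace V" "f \<in> V" "g \<in> V"
  shows "(\<lambda>x. a * f x + b * g x) \<in> V"
proof -
  have "(\<lambda>x. a * f x) \<in> V" "(\<lambda>x. b * g x) \<in> V" using assms unfolding fsubspace_def by auto
  thus ?thesis using assms(1) unfolding fsubspace_def by fast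
qed

lemma hb_extend:
  assumes sl: "sublin V p" and fs: "fsubspace V" and zV: "z \<in> V" and MA: "M \<in> hbA V p z"
    and yV: "y \<in> V" and ny: "\<not> (\<exists>r. (y,r) \<in> M)"
  shows "\<exists>M'\<in>hbA V p z. M \<subseteq> M' \<and> M' \<noteq> M"
proof -
  have hom: "\<And>f c. f\<in>V \<Longrightarrow> c \<ge> 0 \<Longrightarrow> p (\<lambda>x. c*f x) = c * p f" using sl unfolding sublin_def by blast
  have sub: "\<And>f g. f\<in>V \<Longrightarrow> g\<in>V \<Longrightarrow> p (\<lambda>x. f x + g x) \<le> p f + p g" using sl unfolding sublin_def by blast
  have MV: "\<And>a r. (a,r)\<in>M \<Longrightarrow> a \<in> V" using MA unfolding hbA_def by blast
  have Mfun: "\<And>a r s. (a,r)\<in>M \<Longrightarrow> (a,s)\<in>M \<Longrightarrow> r = s" using MA unfolding hbA_def by blast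
  have Madd: "\<And>a r b s. (a,r)\<in>M \<Longrightarrow> (b,s)\<in>M \<Longrightarrow> ((\<lambda>x. a x + b x), r+s) \<in> M"
    using MA unfolding hbA_def by blast
  have Msc: "\<And>a r c. (a,r)\<in>M \<Longrightarrow> ((\<lambda>x. c*a x), c*r)\<in>M" using MA unfolding hbA_def by blast
  have Mdom: "\<And>a r. (a,r)\<in>M \<Longrightarrow> r \<le> p a" using MA unfolding hbA_def by blast
  have zM: "(z, p z) \<in> M" using MA unfolding hbA_def by blast
  have key: "r - p (\<lambda>x. a x - y x) \<le> p (\<lambda>x. b x + y x) - s" if "(a,r)\<in>M" "(b,s)\<in>M" for a r b s
  proof -
    have aV: "a \<in> V" and bV: "b \<in> V" using MV that by auto
    have 1: "(\<lambda>x. a x - y x) \<in> V" using fsub_lin[OF fs aV yV, of 1 "-1"] by simp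
    have 2: "(\<lambda>x. b x + y x) \<in> V" using fsub_lin[OF fs bV yV, of 1 1] by simp
    have "r + s \<le> p (\<lambda>x. a x + b x)" using Mdom[OF Madd[OF that]] .
    also have "(\<lambda>x. a x + b x) = (\<lambda>x. (a x - y x) + (b x + y x))" by auto
    also have "p \<dots> \<le> p (\<lambda>x. a x - y x) + p (\<lambda>x. b x + y x)" by (rule sub[OF 1 2])
    finally show ?thesis by simp
  qed
  define SS where "SS = {r - p (\<lambda>x. a x - y x) | a r. (a,r) \<in> M}"
  define c where "c = Sup SS"
  have SSne: "SS \<noteq> {}" using zM unfolding SS_def by blast
  have SSb: "bdd_above SS" unfolding SS_def bdd_above_def
    using key[OF _ zM] by blast
  have c1: "r - p (\<lambda>x. a x - y x) \<le> c" if "(a,r)\<in>M" for a r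
    unfolding c_def by (rule cSup_upper[OF _ SSb]) (use that SS_def in blast)
  have c2: "c \<le> p (\<lambda>x. b x + y x) - s" if "(b,s)\<in>M" for b s
    unfolding c_def by (rule cSup_least[OF SSne]) (use key that SS_def in blast)
  define M' where "M' = {((\<lambda>x. a x + t * y x), r + t * c) | a r t. (a,r) \<in> M}"
  have dom': "r + t * c \<le> p (\<lambda>x. a x + t * y x)" if ar: "(a,r)\<in>M" for a r t
  proof -
    have aV: "a \<in> V" using MV ar by auto
    consider "t > 0" | "t = 0" | "t < 0" by linarith
    thus ?thesis
    proof cases
      case 1
      have m: "((\<lambda>x. (1/t) * a x), (1/t) * r) \<in> M" using Msc[OF ar] .
      have "c \<le> p (\<lambda>x. (1/t) * a x + y x) - (1/t) * r" using c2[OF m] .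
      hence "t * c \<le> t * p (\<lambda>x. (1/t) * a x + y x) - r" using 1
        by (simp add: field_simps)
      also have "t * p (\<lambda>x. (1/t) * a x + y x) = p (\<lambda>x. t * ((1/t) * a x + y x))"
        using hom[OF fsub_lin[OF fs aV yV, of "1/t" 1]] 1 by simp
      also have "(\<lambda>x. t * ((1/t) * a x + y x)) = (\<lambda>x. a x + t * y x)"
        using 1 by (auto simp: field_simps)
      finally show ?thesis by simp
    next
      case 2 thus ?thesis using Mdom[OF ar] by simp
    next
      case 3
      define u where "u = -t"
      have u: "u > 0" using 3 u_def by simp
      have m: "((\<lambda>x. (1/u) * a x), (1/u) * r) \<in> M" using Msc[OF ar] .
      have "(1/u) * r - p (\<lambda>x. (1/u) * a x - y x) \<le> c" using c1[OF m] .
      hence "r - u * p (\<lambda>x. (1/u) * a x - y x) \<le> u * c" using u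
        by (simp add: field_simps)
      also have "u * p (\<lambda>x. (1/u) * a x - y x) = p (\<lambda>x. u * ((1/u) * a x - y x))"
        using hom[OF fsub_lin[OF fs aV yV, of "1/u" "-1"]] u by simp
      also have "(\<lambda>x. u * ((1/u) * a x - y x)) = (\<lambda>x. a x + t * y x)"
        using u u_def by (auto simp: field_simps)
      finally show ?thesis using u_def by simp
    qed
  qed
  have M'A: "M' \<in> hbA V p z" unfolding hbA_def
  proof (rule CollectI, intro conjI allI impI)
    show "M' \<subseteq> V \<times> UNIV" unfolding M'_def using MV fsub_lin[OF fs _ yV, of _ 1] by fastforce
    show "(z, p z) \<in> M'" unfolding M'_def using zM by force
  next
    fix a r s assume h1: "(a,r) \<in> M'" and h2: "(a,s) \<in> M'"
    obtain a1 r1 t1 where e1: "a = (\<lambda>x. a1 x + t1 * y x)" "r = r1 + t1 * c" "(a1,r1)\<in>M"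
      using h1 unfolding M'_def by blast
    obtain a2 r2 t2 where e2: "a = (\<lambda>x. a2 x + t2 * y x)" "s = r2 + t2 * c" "(a2,r2)\<in>M"
      using h2 unfolding M'_def by blast
    have eq: "\<And>x. a1 x + t1 * y x = a2 x + t2 * y x" using e1(1) e2(1) by metis
    have "t1 = t2"
    proof (rule ccontr)
      assume ne: "t1 \<noteq> t2"
      have "((\<lambda>x. a2 x + (-1) * a1 x), r2 + (-1) * r1) \<in> M"
        using Madd[OF e2(3) Msc[OF e1(3), of "-1"]] by simp
      from Msc[OF this, of "1/(t1 - t2)"]
      have "((\<lambda>x. (1/(t1-t2)) * (a2 x + (-1) * a1 x)), (1/(t1-t2)) * (r2 + (-1) * r1)) \<in> M" .
      moreover have "(\<lambda>x. (1/(t1-t2)) * (a2 x + (-1) * a1 x)) = y"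
      proof
        fix x have "a2 x - a1 x = (t1 - t2) * y x" using eq[of x] by (simp add: algebra_simps)
        thus "(1/(t1-t2)) * (a2 x + (-1) * a1 x) = y x" using ne by (simp add: field_simps)
      qed
      ultimately show False using ny by auto
    qed
    moreover have "a1 = a2" using eq \<open>t1 = t2\<close> by auto
    ultimately show "r = s" using e1 e2 Mfun by auto
  next
    fix a r b s assume h1: "(a,r) \<in> M'" and h2: "(b,s) \<in> M'"
    obtain a1 r1 t1 where e1: "a = (\<lambda>x. a1 x + t1 * y x)" "r = r1 + t1 * c" "(a1,r1)\<in>M"
      using h1 unfolding M'_def by blast
    obtain a2 r2 t2 where e2: "b = (\<lambda>x. a2 x + t2 * y x)" "s = r2 + t2 * c" "(a2,r2)\<in>M"
      using h2 unfolding M'_def by blast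
    have "((\<lambda>x. a1 x + a2 x), r1 + r2) \<in> M" using Madd[OF e1(3) e2(3)] .
    moreover have "(\<lambda>x. a x + b x) = (\<lambda>x. (a1 x + a2 x) + (t1 + t2) * y x)" using e1 e2 by (auto simp: algebra_simps)
    moreover have "r + s = (r1 + r2) + (t1 + t2) * c" using e1 e2 by (simp add: algebra_simps)
    ultimately show "((\<lambda>x. a x + b x), r + s) \<in> M'" unfolding M'_def mem_Collect_eq
      by (intro exI[of _ "\<lambda>x. a1 x + a2 x"] exI[of _ "r1+r2"] exI[of _ "t1+t2"]) simp
  next
    fix a r d assume h1: "(a,r) \<in> M'"
    obtain a1 r1 t1 where e1: "a = (\<lambda>x. a1 x + t1 * y x)" "r = r1 + t1 * c" "(a1,r1)\<in>M"
      using h1 unfolding M'_def by blast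
    have "((\<lambda>x. d * a1 x), d * r1) \<in> M" using Msc[OF e1(3)] .
    moreover have "(\<lambda>x. d * a x) = (\<lambda>x. d * a1 x + (d * t1) * y x)" using e1 by (auto simp: algebra_simps)
    moreover have "d * r = d * r1 + (d * t1) * c" using e1 by (simp add: algebra_simps)
    ultimately show "((\<lambda>x. d * a x), d * r) \<in> M'" unfolding M'_def mem_Collect_eq
      by (intro exI[of _ "\<lambda>x. d * a1 x"] exI[of _ "d*r1"] exI[of _ "d*t1"]) simp
  next
    fix a r assume h1: "(a,r) \<in> M'"
    obtain a1 r1 t1 where e1: "a = (\<lambda>x. a1 x + t1 * y x)" "r = r1 + t1 * c" "(a1,r1)\<in>M"
      using h1 unfolding M'_def by blast
    show "r \<le> p a" using dom'[OF e1(3), of t1] e1 by simp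
  qed
  have sub': "M \<subseteq> M'"
  proof
    fix u assume "u \<in> M"
    then obtain a r where "u = (a,r)" "(a,r) \<in> M" by (cases u) auto
    thus "u \<in> M'" unfolding M'_def by force
  qed
  have "((\<lambda>x. 0 * z x), 0 * p z) \<in> M" using Msc[OF zM] .
  hence "(y, c) \<in> M'" unfolding M'_def mem_Collect_eq
    by (intro exI[of _ "\<lambda>x. 0 * z x"] exI[of _ "0 * p z"] exI[of _ 1]) simp
  hence "M' \<noteq> M" using ny by auto
  thus ?thesis using M'A sub' by blast
qed

theorem hahn_banach_fun:
  assumes sl: "sublin V p" and fs: "fsubspace V" and zV: "z \<in> V"
  shows "\<exists>L. (\<forall>f\<in>V. \<forall>g\<in>V. L (\<lambda>x. f x + g x) = L f + L g) \<and> (\<forall>f\<in>V. \<forall>c. L (\<lambda>x. c * f x) = c * L f)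
           \<and> (\<forall>f\<in>V. L f \<le> p f) \<and> L z = p z"
proof -
  have "\<forall>C\<in>chains (hbA V p z). \<exists>U\<in>hbA V p z. \<forall>X\<in>C. X \<subseteq> U"
  proof
    fix C assume C: "C \<in> chains (hbA V p z)"
    show "\<exists>U\<in>hbA V p z. \<forall>X\<in>C. X \<subseteq> U"
    proof (cases "C = {}")
      case True thus ?thesis using hb_G0[OF sl fs zV] by blast
    next
      case False thus ?thesis using hb_chain[OF C False] by blast
    qed
  qed
  from Zorn_Lemma2[OF this] obtain M where MA: "M \<in> hbA V p z"
    and max: "\<forall>X\<in>hbA V p z. M \<subseteq> X \<longrightarrow> X = M" by blast
  have tot: "\<exists>r. (y,r) \<in> M" if "y \<in> V" for y
    using hb_extend[OF sl fs zV MA that] max by blast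
  have Mfun: "\<And>a r s. (a,r)\<in>M \<Longrightarrow> (a,s)\<in>M \<Longrightarrow> r = s" using MA unfolding hbA_def by blast
  have Madd: "\<And>a r b s. (a,r)\<in>M \<Longrightarrow> (b,s)\<in>M \<Longrightarrow> ((\<lambda>x. a x + b x), r+s) \<in> M"
    using MA unfolding hbA_def by blast
  have Msc: "\<And>a r c. (a,r)\<in>M \<Longrightarrow> ((\<lambda>x. c*a x), c*r)\<in>M" using MA unfolding hbA_def by blast
  have Mdom: "\<And>a r. (a,r)\<in>M \<Longrightarrow> r \<le> p a" using MA unfolding hbA_def by blast
  have zM: "(z, p z) \<in> M" using MA unfolding hbA_def by blast
  define L where "L y = (THE r. (y,r) \<in> M)" for y
  have LM: "(y, L y) \<in> M" if yV: "y \<in> V" for y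
  proof -
    obtain r where r: "(y,r) \<in> M" using tot[OF yV] by blast
    have "L y = r" unfolding L_def using r Mfun by blast
    thus ?thesis using r by simp
  qed
  have Leq: "L y = r" if "(y,r) \<in> M" for y r
    unfolding L_def using that Mfun by blast
  show ?thesis
  proof (intro exI[of _ L] conjI ballI allI)
    fix f g assume "f \<in> V" "g \<in> V"
    thus "L (\<lambda>x. f x + g x) = L f + L g" using Leq[OF Madd[OF LM LM]] by blast
  next
    fix f c assume "f \<in> V"
    thus "L (\<lambda>x. c * f x) = c * L f" using Leq[OF Msc[OF LM]] by blast
  next
    fix f assume "f \<in> V" thus "L f \<le> p f" using Mdom[OF LM] by blast
  next
    show "L z = p z" using Leq[OF zM] .
  qed
qed


lemma normal_euclid:
  assumes "compact (UNIV::'a::t2_space set)"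
  shows "normal_space (euclidean::'a topology)"
proof (rule compact_Hausdorff_or_regular_imp_normal_space)
  show "compact_space (euclidean::'a topology)" using assms by (simp add: compact_space_def compactin_euclidean_iff)
  have "Hausdorff_space (euclidean::'a topology)" unfolding Hausdorff_space_def disjnt_def using hausdorff by auto
  thus "Hausdorff_space (euclidean::'a topology) \<or> regular_space (euclidean::'a topology)" by simp
qed

lemma sep_closed:
  fixes S T :: "'a::t2_space set"
  assumes "compact (UNIV::'a::t2_space set)" "closed S" "closed T" "S \<inter> T = {}"
  shows "\<exists>U V. open U \<and> open V \<and> S \<subseteq> U \<and> T \<subseteq> V \<and> U \<inter> V = {}"
  using normal_euclid[OF assms(1)] assms(2-4) unfolding normal_space_def
  by (auto simp: disjnt_def)

lemma urysohn_fun: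
  fixes S T :: "'a::t2_space set"
  assumes "compact (UNIV::'a::t2_space set)" "closed S" "closed T" "S \<inter> T = {}"
  shows "\<exists>f. continuous_on UNIV f \<and> (\<forall>x. 0 \<le> f x \<and> f x \<le> (1::real)) \<and> (\<forall>x\<in>S. f x = 1) \<and> (\<forall>x\<in>T. f x = 0)"
proof -
  obtain f where f: "continuous_map euclidean (top_of_set {0..1::real}) f" "f ` T \<subseteq> {0}" "f ` S \<subseteq> {1}"
    using Urysohn_lemma[OF normal_euclid[OF assms(1)], of T S 0 1] assms(2-4)
    by (auto simp: disjnt_def)
  have "continuous_map euclidean euclidean f" "f ` UNIV \<subseteq> {0..1}"
    using f(1) by (auto simp: continuous_map_in_subtopology)
  hence "continuous_on UNIV f" "\<forall>x. 0 \<le> f x \<and> f x \<le> 1"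
    by (auto simp: continuous_map_iff_continuous2 image_subset_iff)
  thus ?thesis using f(2,3) by blast
qed

definition prec :: "('a::topological_space \<Rightarrow> real) \<Rightarrow> 'a set \<Rightarrow> bool" where
  "prec f U \<longleftrightarrow> continuous_on UNIV f \<and> (\<forall>x. 0 \<le> f x \<and> f x \<le> 1) \<and>
     (\<exists>K. closed K \<and> K \<subseteq> U \<and> (\<forall>x. x \<notin> K \<longrightarrow> f x = 0))"

lemma urysohn_prec:
  fixes K U :: "'a::t2_space set"
  assumes "compact (UNIV::'a::t2_space set)" "closed K" "open U" "K \<subseteq> U"
  shows "\<exists>g. prec g U \<and> (\<forall>x\<in>K. g x = 1)"
proof -
  have "closed (-U)" "K \<inter> -U = {}" using assms by auto
  from sep_closed[OF assms(1,2) this] obtain W W' where W: "open W" "open W'" "K \<subseteq> W" "-U \<subseteq> W'" "W \<inter> W' = {}"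
    by blast
  have "closed (-W)" "K \<inter> -W = {}" using W by auto
  from urysohn_fun[OF assms(1,2) this]
  obtain g :: "'a \<Rightarrow> real" where g: "continuous_on UNIV g" "\<forall>x. 0 \<le> g x \<and> g x \<le> 1" "\<forall>x\<in>K. g x = 1" "\<forall>x\<in>-W. g x = 0"
    by blast
  have "closed (-W')" using W by auto
  moreover have "-W' \<subseteq> U" using W by auto
  moreover have "\<forall>x. x \<notin> -W' \<longrightarrow> g x = 0" using W g by auto
  ultimately show ?thesis unfolding prec_def using g by blast
qed

locale rz =
  fixes L :: "('a::t2_space \<Rightarrow> real) \<Rightarrow> real"
  assumes cpt: "compact (UNIV::'a set)"
  and Ladd: "\<And>f g. continuous_on UNIV f \<Longrightarrow> continuous_on UNIV g \<Longrightarrow> L (\<lambda>x. f x + g x) = L f + L g"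
  and Lhom: "\<And>f c. continuous_on UNIV f \<Longrightarrow> L (\<lambda>x. c * f x) = c * L f"
  and Lpos: "\<And>f. continuous_on UNIV f \<Longrightarrow> (\<forall>x. f x \<ge> 0) \<Longrightarrow> L f \<ge> 0"
begin

lemma L0: "L (\<lambda>x. 0) = 0"
  using Lhom[of "\<lambda>x. 0" 0] by simp

lemma Ldiff: "continuous_on UNIV f \<Longrightarrow> continuous_on UNIV g \<Longrightarrow> L (\<lambda>x. f x - g x) = L f - L g"
proof -
  assume f: "continuous_on UNIV f" and g: "continuous_on UNIV g"
  have g': "continuous_on UNIV (\<lambda>x. (-1) * g x)" using g by (intro continuous_intros)
  have "L (\<lambda>x. f x + (-1) * g x) = L f + L (\<lambda>x. (-1) * g x)" using Ladd[OF f g'] .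
  also have "L (\<lambda>x. (-1) * g x) = - L g" using Lhom[OF g, of "-1"] by simp
  finally show ?thesis by simp
qed

lemma Lmono: "continuous_on UNIV f \<Longrightarrow> continuous_on UNIV g \<Longrightarrow> (\<And>x. f x \<le> g x) \<Longrightarrow> L f \<le> L g"
  using Lpos[of "\<lambda>x. g x - f x"] Ldiff[of g f] by (auto intro: continuous_intros)

lemma Lconst: "L (\<lambda>x. c) = c * L (\<lambda>x. 1)"
  using Lhom[of "\<lambda>x. 1" c] by simp

lemma Lsum: "finite A \<Longrightarrow> (\<And>k. k \<in> A \<Longrightarrow> continuous_on UNIV (g k)) \<Longrightarrow> L (\<lambda>x. \<Sum>k\<in>A. g k x) = (\<Sum>k\<in>A. L (g k))"
proof (induction A rule: finite_induct)
  case empty thus ?case using L0 by simp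
next
  case (insert a A)
  have "L (\<lambda>x. \<Sum>k\<in>insert a A. g k x) = L (\<lambda>x. g a x + (\<Sum>k\<in>A. g k x))"
    using insert.hyps by simp
  also have "\<dots> = L (g a) + L (\<lambda>x. \<Sum>k\<in>A. g k x)"
    using insert.prems by (intro Ladd continuous_on_sum) auto
  finally show ?case using insert by simp
qed

definition mu0 :: "'a set \<Rightarrow> real" where
  "mu0 U = Sup {L f | f. prec f U}"

definition mus :: "'a set \<Rightarrow> real" where
  "mus A = Inf {mu0 U | U. open U \<and> A \<subseteq> U}"

lemma prec_zero: "prec (\<lambda>x. 0) U"
  unfolding prec_def by auto

lemma prec_le1: "prec f U \<Longrightarrow> L f \<le> L (\<lambda>x. 1)"
  unfolding prec_def by (intro Lmono) auto

lemma prec_mono: "prec f U \<Longrightarrow> U \<subseteq> V \<Longrightarrow> prec f V"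
  unfolding prec_def by blast

lemma mu0_ne: "{L f | f. prec f U} \<noteq> {}" using prec_zero by blast
lemma mu0_bdd: "bdd_above {L f | f. prec f U}"
  unfolding bdd_above_def using prec_le1 by blast

lemma mu0_upper: "prec f U \<Longrightarrow> L f \<le> mu0 U"
  unfolding mu0_def by (rule cSup_upper[OF _ mu0_bdd]) blast

lemma mu0_least: "(\<And>f. prec f U \<Longrightarrow> L f \<le> c) \<Longrightarrow> mu0 U \<le> c"
  unfolding mu0_def by (rule cSup_least[OF mu0_ne]) blast

lemma mu0_nonneg: "0 \<le> mu0 U"
  using mu0_upper[OF prec_zero] L0 by simp

lemma mu0_le1: "mu0 U \<le> L (\<lambda>x. 1)"
  by (rule mu0_least) (rule prec_le1)

lemma mu0_mono: "U \<subseteq> V \<Longrightarrow> mu0 U \<le> mu0 V"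
  by (rule mu0_least) (rule mu0_upper, erule prec_mono)

lemma mus_ne: "{mu0 U | U. open U \<and> A \<subseteq> U} \<noteq> {}" by auto
lemma mus_bdd: "bdd_below {mu0 U | U. open U \<and> A \<subseteq> U}"
  unfolding bdd_below_def using mu0_nonneg by blast

lemma mus_lower: "open U \<Longrightarrow> A \<subseteq> U \<Longrightarrow> mus A \<le> mu0 U"
  unfolding mus_def by (rule cInf_lower[OF _ mus_bdd]) blast

lemma mus_greatest: "(\<And>U. open U \<Longrightarrow> A \<subseteq> U \<Longrightarrow> c \<le> mu0 U) \<Longrightarrow> c \<le> mus A"
  unfolding mus_def by (rule cInf_greatest[OF mus_ne]) blast

lemma mus_open: "open U \<Longrightarrow> mus U = mu0 U"
proof -
  assume U: "open U"
  have "mus U \<le> mu0 U" using mus_lower[OF U] by simp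
  moreover have "mu0 U \<le> mus U" by (rule mus_greatest) (rule mu0_mono)
  ultimately show ?thesis by simp
qed

lemma mus_nonneg: "0 \<le> mus A"
  by (rule mus_greatest) (rule mu0_nonneg)

lemma mus_le1: "mus A \<le> L (\<lambda>x. 1)"
proof -
  have "mus A \<le> mu0 UNIV" by (rule mus_lower) auto
  thus ?thesis using mu0_le1[of UNIV] by linarith
qed

lemma mus_mono: "A \<subseteq> B \<Longrightarrow> mus A \<le> mus B"
  by (rule mus_greatest) (rule mus_lower, auto)

lemma mus_approx: "e > 0 \<Longrightarrow> \<exists>U. open U \<and> A \<subseteq> U \<and> mu0 U < mus A + e"
proof (rule ccontr)
  assume "e > 0" "\<not> (\<exists>U. open U \<and> A \<subseteq> U \<and> mu0 U < mus A + e)"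
  hence "mus A + e \<le> mus A" by (intro mus_greatest) (meson not_less)
  thus False using \<open>e > 0\<close> by simp
qed

lemma mu0_approx: "e > 0 \<Longrightarrow> \<exists>f. prec f U \<and> mu0 U - e < L f"
proof (rule ccontr)
  assume "e > 0" "\<not> (\<exists>f. prec f U \<and> mu0 U - e < L f)"
  hence "mu0 U \<le> mu0 U - e" by (intro mu0_least) (meson not_less)
  thus False using \<open>e > 0\<close> by simp
qed

end


lemma eps_le:
  assumes "c > 0" "\<And>e. e > 0 \<Longrightarrow> x \<le> y + c * e" shows "x \<le> (y::real)"
proof (rule field_le_epsilon)
  fix e :: real assume e: "e > 0"
  have "x \<le> y + c * (e / c)" using assms(2)[of "e/c"] assms(1) e by simp
  thus "x \<le> y + e" using assms(1) by simp
qed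

context rz begin

lemma prec_cont: "prec f U \<Longrightarrow> continuous_on UNIV f" unfolding prec_def by blast

lemma mu0_sub2:
  assumes U: "open U" and V: "open V"
  shows "mu0 (U \<union> V) \<le> mu0 U + mu0 V"
proof (rule mu0_least)
  fix f assume pf: "prec f (U \<union> V)"
  then obtain K where K: "closed K" "K \<subseteq> U \<union> V" "\<forall>x. x \<notin> K \<longrightarrow> f x = 0"
    and fc: "continuous_on UNIV f" and f01: "\<forall>x. 0 \<le> f x \<and> f x \<le> 1" unfolding prec_def by blast
  have "closed (K - V)" "closed (-U)" "(K - V) \<inter> -U = {}" using K U V by auto
  from sep_closed[OF cpt this] obtain W1 W2 where W: "open W1" "open W2" "K - V \<subseteq> W1" "-U \<subseteq> W2" "W1 \<inter> W2 = {}"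
    by blast
  define C1 where "C1 = K \<inter> -W2"
  define C2 where "C2 = K - W1"
  have C1: "closed C1" "C1 \<subseteq> U" using K W unfolding C1_def by auto
  have C2: "closed C2" "C2 \<subseteq> V" using K W unfolding C2_def by auto
  have KC: "K \<subseteq> C1 \<union> C2" using W unfolding C1_def C2_def by auto
  obtain g1 where g1: "prec g1 U" "\<forall>x\<in>C1. g1 x = 1" using urysohn_prec[OF cpt C1(1) U C1(2)] by blast
  obtain g2 where g2: "prec g2 V" "\<forall>x\<in>C2. g2 x = 1" using urysohn_prec[OF cpt C2(1) V C2(2)] by blast
  obtain K1 where K1: "closed K1" "K1 \<subseteq> U" "\<forall>x. x \<notin> K1 \<longrightarrow> g1 x = 0"
    and g1c: "continuous_on UNIV g1" and g101: "\<forall>x. 0 \<le> g1 x \<and> g1 x \<le> 1" using g1(1) unfolding prec_def by blast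
  obtain K2 where K2: "closed K2" "K2 \<subseteq> V" "\<forall>x. x \<notin> K2 \<longrightarrow> g2 x = 0"
    and g2c: "continuous_on UNIV g2" and g201: "\<forall>x. 0 \<le> g2 x \<and> g2 x \<le> 1" using g2(1) unfolding prec_def by blast
  define f1 where "f1 = (\<lambda>x. f x * g1 x)"
  define f2 where "f2 = (\<lambda>x. f x * ((1 - g1 x) * g2 x))"
  have f1c: "continuous_on UNIV f1" unfolding f1_def using fc g1c by (intro continuous_intros)
  have f2c: "continuous_on UNIV f2" unfolding f2_def using fc g1c g2c by (intro continuous_intros)
  have pf1: "prec f1 U" unfolding prec_def
  proof (intro conjI allI exI[of _ K1])
    fix x show "0 \<le> f1 x" "f1 x \<le> 1" unfolding f1_def using f01 g101
      by (auto intro: mult_nonneg_nonneg mult_le_one)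
  qed (use f1c K1 in \<open>auto simp: f1_def\<close>)
  have pf2: "prec f2 V" unfolding prec_def
  proof (intro conjI allI exI[of _ K2])
    fix x
    have a: "0 \<le> (1 - g1 x) * g2 x" "(1 - g1 x) * g2 x \<le> 1" using g101 g201
      by (auto intro: mult_nonneg_nonneg mult_le_one)
    show "0 \<le> f2 x" "f2 x \<le> 1" unfolding f2_def using f01 a
      by (auto intro: mult_nonneg_nonneg mult_le_one)
  qed (use f2c K2 in \<open>auto simp: f2_def\<close>)
  have feq: "f = (\<lambda>x. f1 x + f2 x)"
  proof
    fix x show "f x = f1 x + f2 x"
    proof (cases "x \<in> K")
      case False thus ?thesis using K by (simp add: f1_def f2_def)
    next
      case True
      show ?thesis
      proof (cases "x \<in> C1")
        case True thus ?thesis using g1 by (simp add: f1_def f2_def)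
      next
        case False
        hence "x \<in> C2" using KC \<open>x \<in> K\<close> by auto
        thus ?thesis using g2 by (simp add: f1_def f2_def algebra_simps)
      qed
    qed
  qed
  have "L f = L f1 + L f2" using Ladd[OF f1c f2c] feq by simp
  also have "\<dots> \<le> mu0 U + mu0 V" using mu0_upper[OF pf1] mu0_upper[OF pf2] by simp
  finally show "L f \<le> mu0 U + mu0 V" .
qed

lemma mu0_subfin:
  fixes U :: "nat \<Rightarrow> 'a set"
  assumes "\<And>i. open (U i)"
  shows "mu0 (\<Union>i<n. U i) \<le> (\<Sum>i<n. mu0 (U i))"
proof (induction n)
  case 0
  have "mu0 ({}::'a set) \<le> 0"
  proof (rule mu0_least)
    fix f assume "prec f ({}::'a set)"
    hence "f = (\<lambda>x. 0)" unfolding prec_def by auto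
    thus "L f \<le> 0" using L0 by simp
  qed
  thus ?case by simp
next
  case (Suc n)
  have "(\<Union>i<Suc n. U i) = (\<Union>i<n. U i) \<union> U n" by (auto simp: lessThan_Suc)
  moreover have "open (\<Union>i<n. U i)" using assms by auto
  ultimately have "mu0 (\<Union>i<Suc n. U i) \<le> mu0 (\<Union>i<n. U i) + mu0 (U n)"
    using mu0_sub2[of "\<Union>i<n. U i" "U n"] assms by simp
  thus ?case using Suc by simp
qed

lemma prec_finite_sub:
  fixes U :: "nat \<Rightarrow> 'a set"
  assumes Uo: "\<And>i. open (U i)" and pf: "prec f (\<Union>i. U i)"
  shows "\<exists>n. prec f (\<Union>i<n. U i)"
proof -
  obtain K where K: "closed K" "K \<subseteq> (\<Union>i. U i)" "\<forall>x. x \<notin> K \<longrightarrow> f x = 0"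
    using pf unfolding prec_def by blast
  have fc: "continuous_on UNIV f" "\<forall>x. 0 \<le> f x \<and> f x \<le> 1" using pf unfolding prec_def by auto
  have "compact (UNIV \<inter> K)" by (rule compact_Int_closed[OF cpt K(1)])
  hence cK: "compact K" by simp
  obtain C' where C': "finite C'" "K \<subseteq> \<Union> (U ` C')"
  proof (rule compactE_image[OF cK, of UNIV U])
    show "\<And>T. T \<in> UNIV \<Longrightarrow> open (U T)" using Uo by blast
    show "K \<subseteq> \<Union> (U ` UNIV)" using K(2) by simp
  next
    fix C'' assume "C'' \<subseteq> UNIV" "finite C''" "K \<subseteq> \<Union> (U ` C'')"
    thus thesis using that by blast
  qed
  define n where "n = Suc (Max (insert 0 C'))"
  have sub: "\<Union> (U ` C') \<subseteq> (\<Union>i<n. U i)"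
  proof
    fix x assume "x \<in> \<Union> (U ` C')"
    then obtain i where i: "i \<in> C'" "x \<in> U i" by blast
    have "i \<le> Max (insert 0 C')" using i(1) C'(1) by simp
    hence "i < n" unfolding n_def by simp
    thus "x \<in> (\<Union>i<n. U i)" using i(2) by blast
  qed
  have "K \<subseteq> (\<Union>i<n. U i)" using C'(2) sub by (rule subset_trans)
  hence "prec f (\<Union>i<n. U i)" unfolding prec_def using fc K(1,3) by blast
  thus ?thesis by blast
qed

lemma geom_half: "(\<Sum>i<n. e / 2 ^ Suc i) \<le> (e::real)" if "e \<ge> 0"
proof -
  have "(\<Sum>i<n. e / 2 ^ Suc i) = e * (1 - 1 / 2 ^ n)"
    by (induction n) (auto simp: field_simps)
  also have "\<dots> \<le> e" using that by (simp add: mult_left_le)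
  finally show ?thesis .
qed

lemma mus_countable_sub:
  fixes A :: "nat \<Rightarrow> 'a set"
  shows "ennreal (mus (\<Union>i. A i)) \<le> (\<Sum>i. ennreal (mus (A i)))"
proof (rule ennreal_le_epsilon)
  fix e :: real assume ytop: "(\<Sum>i. ennreal (mus (A i))) < \<top>" and e: "0 < e"
  define s where "s = enn2real (\<Sum>i. ennreal (mus (A i)))"
  have sy: "(\<Sum>i. ennreal (mus (A i))) = ennreal s" unfolding s_def using ytop
    by (simp add: less_top)
  have s0: "0 \<le> s" unfolding s_def by simp
  have partial: "(\<Sum>i<n. mus (A i)) \<le> s" for n
  proof -
    have "(\<Sum>i<n. ennreal (mus (A i))) \<le> (\<Sum>i. ennreal (mus (A i)))"
      by (rule sum_le_suminf) auto
    hence "ennreal (\<Sum>i<n. mus (A i)) \<le> ennreal s" using sy by (simp add: sum_ennreal mus_nonneg)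
    thus ?thesis using s0 by (simp add: ennreal_le_iff)
  qed
  have "\<forall>i. \<exists>U. open U \<and> A i \<subseteq> U \<and> mu0 U < mus (A i) + e / 2 ^ Suc i"
    using mus_approx e by simp
  then obtain U where U: "\<And>i. open (U i)" "\<And>i. A i \<subseteq> U i" "\<And>i. mu0 (U i) < mus (A i) + e / 2 ^ Suc i"
    by metis
  have "mu0 (\<Union>i. U i) \<le> s + e"
  proof (rule mu0_least)
    fix f assume "prec f (\<Union>i. U i)"
    then obtain n where n: "prec f (\<Union>i<n. U i)" using prec_finite_sub U(1) by blast
    have "L f \<le> mu0 (\<Union>i<n. U i)" by (rule mu0_upper[OF n])
    also have "\<dots> \<le> (\<Sum>i<n. mu0 (U i))" by (rule mu0_subfin[OF U(1)])
    also have "\<dots> \<le> (\<Sum>i<n. mus (A i) + e / 2 ^ Suc i)" by (intro sum_mono less_imp_le U(3))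
    also have "\<dots> = (\<Sum>i<n. mus (A i)) + (\<Sum>i<n. e / 2 ^ Suc i)" by (simp add: sum.distrib)
    also have "\<dots> \<le> s + e" using partial[of n] geom_half[of e n] e by simp
    finally show "L f \<le> s + e" .
  qed
  moreover have "mus (\<Union>i. A i) \<le> mu0 (\<Union>i. U i)" using U(1,2) by (intro mus_lower) auto
  ultimately have "mus (\<Union>i. A i) \<le> s + e" by simp
  hence "ennreal (mus (\<Union>i. A i)) \<le> ennreal (s + e)" by (simp add: ennreal_leI)
  thus "ennreal (mus (\<Union>i. A i)) \<le> (\<Sum>i. ennreal (mus (A i))) + ennreal e"
    using sy s0 e by (simp add: ennreal_plus)
qed

lemma mus_sub2: fixes A B :: "'a set" shows "mus (A \<union> B) \<le> mus A + mus B"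
proof -
  have main3: "mus (A \<union> B) \<le> mus A + mus B + 3 * e" if e: "e > 0" for e
  proof -
    obtain U where U: "open U" "A \<subseteq> U" "mu0 U < mus A + e" using mus_approx[OF e] by blast
    obtain V where V: "open V" "B \<subseteq> V" "mu0 V < mus B + e" using mus_approx[OF e] by blast
    have "mus (A \<union> B) \<le> mu0 (U \<union> V)" using U V by (intro mus_lower) auto
    also have "\<dots> \<le> mu0 U + mu0 V" by (rule mu0_sub2[OF U(1) V(1)])
    finally show ?thesis using U V e by linarith
  qed
  show ?thesis by (rule eps_le[of 3]) (simp, rule main3)
qed

lemma mus_caratheodory:
  fixes A U :: "'a set"
  assumes U: "open U"
  shows "mus (A \<inter> U) + mus (A - U) \<le> mus A"
proof -
  have main: "mus (A \<inter> U) + mus (A - U) \<le> mu0 W + 2 * e" if W: "open W" "A \<subseteq> W" and e: "e > 0" for W e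
  proof -
    obtain f1 where f1: "prec f1 (W \<inter> U)" "mu0 (W \<inter> U) - e < L f1" using mu0_approx[OF e] by blast
    obtain K1 where K1: "closed K1" "K1 \<subseteq> W \<inter> U" "\<forall>x. x \<notin> K1 \<longrightarrow> f1 x = 0"
      and f1c: "continuous_on UNIV f1" and f101: "\<forall>x. 0 \<le> f1 x \<and> f1 x \<le> 1" using f1(1) unfolding prec_def by blast
    obtain f2 where f2: "prec f2 (W - K1)" "mu0 (W - K1) - e < L f2" using mu0_approx[OF e] by blast
    obtain K2 where K2: "closed K2" "K2 \<subseteq> W - K1" "\<forall>x. x \<notin> K2 \<longrightarrow> f2 x = 0"
      and f2c: "continuous_on UNIV f2" and f201: "\<forall>x. 0 \<le> f2 x \<and> f2 x \<le> 1" using f2(1) unfolding prec_def by blast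
    have pf: "prec (\<lambda>x. f1 x + f2 x) W" unfolding prec_def
    proof (intro conjI allI exI[of _ "K1 \<union> K2"])
      fix x
      show "0 \<le> f1 x + f2 x" using f101 f201 by (simp add: add_nonneg_nonneg)
      show "f1 x + f2 x \<le> 1"
      proof (cases "x \<in> K1")
        case True hence "x \<notin> K2" using K2 by auto
        thus ?thesis using K2 f101 by auto
      next
        case False thus ?thesis using K1 f201 by auto
      qed
    qed (use f1c f2c K1 K2 in \<open>auto intro: continuous_intros\<close>)
    have "L (\<lambda>x. f1 x + f2 x) = L f1 + L f2" by (rule Ladd[OF f1c f2c])
    hence "L f1 + L f2 \<le> mu0 W" using mu0_upper[OF pf] by simp
    moreover have "mus (A \<inter> U) \<le> mu0 (W \<inter> U)" using W U by (intro mus_lower) auto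
    moreover have "mus (A - U) \<le> mus (W - K1)" using W K1 by (intro mus_mono) auto
    moreover have "mus (W - K1) = mu0 (W - K1)" using W K1 by (intro mus_open) auto
    ultimately show ?thesis using f1 f2 by simp
  qed
  have main3: "mus (A \<inter> U) + mus (A - U) \<le> mus A + 3 * e" if e: "e > 0" for e
  proof -
    obtain W where W: "open W" "A \<subseteq> W" "mu0 W < mus A + e" using mus_approx[OF e] by blast
    show ?thesis using main[OF W(1,2) e] W(3) by simp
  qed
  show ?thesis by (rule eps_le[of 3]) (simp, rule main3)
qed

end


context rz begin

lemma mu0_empty: "mu0 {} = 0"
proof -
  have "mu0 ({}::'a set) \<le> 0"
  proof (rule mu0_least)
    fix f assume "prec f ({}::'a set)"
    hence "f = (\<lambda>x. 0)" unfolding prec_def by auto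
    thus "L f \<le> 0" using L0 by simp
  qed
  thus ?thesis using mu0_nonneg[of "{}"] by simp
qed

lemma mus_empty: "mus {} = 0"
  using mus_open[of "{}"] mu0_empty by simp

definition fmu :: "'a set \<Rightarrow> ennreal" where "fmu A = ennreal (mus A)"

lemma oms: "outer_measure_space (Pow UNIV) fmu"
  unfolding outer_measure_space_def
proof (intro conjI)
  show "positive (Pow UNIV) fmu" unfolding positive_def fmu_def using mus_empty by simp
  show "increasing (Pow UNIV) fmu" unfolding increasing_def fmu_def
    by (auto intro: ennreal_leI mus_mono)
  show "countably_subadditive (Pow UNIV) fmu" unfolding countably_subadditive_def fmu_def
    using mus_countable_sub by blast
qed

lemma mus_split: "mus (X \<inter> U) + mus (X - U) = mus X" if "open U" for X U :: "'a set"
proof -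
  have "mus X \<le> mus (X \<inter> U) + mus (X - U)"
    using mus_sub2[of "X \<inter> U" "X - U"] by (simp add: Int_Diff_Un)
  thus ?thesis using mus_caratheodory[OF that, of X] by simp
qed

definition LS where "LS = lambda_system UNIV (Pow UNIV) fmu"

lemma ms: "measure_space UNIV LS fmu"
  unfolding LS_def by (rule sigma_algebra.caratheodory_lemma[OF sigma_algebra_Pow oms])

lemma open_LS: "open U \<Longrightarrow> U \<in> LS"
  unfolding LS_def lambda_system_def fmu_def
proof (intro CollectI conjI ballI)
  fix X assume U: "open U"
  have "(UNIV - U) \<inter> X = X - U" by auto
  thus "ennreal (mus (U \<inter> X)) + ennreal (mus ((UNIV - U) \<inter> X)) = ennreal (mus X)"
    using mus_split[OF U, of X] by (simp add: Int_commute ennreal_plus[symmetric] mus_nonneg)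
qed simp

lemma borel_LS: "sets borel \<subseteq> LS"
proof -
  have "sigma_algebra UNIV LS" using ms unfolding measure_space_def by blast
  thus ?thesis unfolding sets_borel by (rule sigma_algebra.sigma_sets_subset) (auto intro: open_LS)
qed

lemma borel_split: "A \<in> sets borel \<Longrightarrow> mus A + mus (-A) = mus UNIV"
proof -
  assume "A \<in> sets borel"
  hence "A \<in> LS" using borel_LS by blast
  hence "\<forall>x\<in>Pow UNIV. fmu (A \<inter> x) + fmu ((UNIV - A) \<inter> x) = fmu x"
    unfolding LS_def lambda_system_def by simp
  hence "fmu (A \<inter> UNIV) + fmu ((UNIV - A) \<inter> UNIV) = fmu UNIV" by (rule bspec) simp
  moreover have "UNIV - A = -A" by auto
  ultimately have "ennreal (mus A) + ennreal (mus (-A)) = ennreal (mus UNIV)"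
    unfolding fmu_def by simp
  hence "ennreal (mus A + mus (-A)) = ennreal (mus UNIV)"
    by (subst ennreal_plus[OF mus_nonneg mus_nonneg])
  moreover have "0 \<le> mus A + mus (-A)" using mus_nonneg[of A] mus_nonneg[of "-A"] by linarith
  ultimately show ?thesis using ennreal_inj[OF _ mus_nonneg] by blast
qed

definition mu where "mu = measure_of UNIV (sets borel) fmu"

lemma mu_sets: "sets mu = sets borel"
proof -
  have "sets mu = sigma_sets UNIV (sets borel)" unfolding mu_def by (rule sets_measure_of) simp
  also have "\<dots> = sets borel" using sets.sigma_sets_eq[of borel] by simp
  finally show ?thesis .
qed

lemma mu_space: "space mu = UNIV"
  unfolding mu_def by (simp add: space_measure_of_conv)

lemma mu_emeasure: "A \<in> sets borel \<Longrightarrow> emeasure mu A = ennreal (mus A)"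
proof -
  assume A: "A \<in> sets borel"
  have ca: "countably_additive LS fmu" using ms unfolding measure_space_def by blast
  have "countably_additive (sets mu) fmu"
    using ca borel_LS unfolding countably_additive_def mu_sets by blast
  moreover have "positive (sets mu) fmu" unfolding positive_def fmu_def using mus_empty by simp
  ultimately have "emeasure mu A = fmu A"
    by (intro emeasure_measure_of[OF mu_def]) (auto simp: mu_sets A)
  thus ?thesis unfolding fmu_def .
qed

lemma mu_measure: "A \<in> sets borel \<Longrightarrow> measure mu A = mus A"
  using mu_emeasure by (simp add: measure_def mus_nonneg)

lemma mu_finite: "finite_measure mu"
  by (rule finite_measureI) (simp add: mu_space mu_emeasure)

lemma mu_regular: "regular_fin_borel mu"
  unfolding regular_fin_borel_def
proof (intro conjI ballI)
  show "sets mu = sets borel" by (rule mu_sets)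
  show "finite_measure mu" by (rule mu_finite)
next
  fix A :: "'a set" assume A: "A \<in> sets borel"
  show "emeasure mu A = (INF U\<in>{U. open U \<and> A \<subseteq> U}. emeasure mu U)"
  proof (rule antisym)
    show "emeasure mu A \<le> (INF U\<in>{U. open U \<and> A \<subseteq> U}. emeasure mu U)"
    proof (rule INF_greatest)
      fix U assume "U \<in> {U. open U \<and> A \<subseteq> U}"
      hence U: "open U" "A \<subseteq> U" by auto
      thus "emeasure mu A \<le> emeasure mu U" using A
        by (simp add: mu_emeasure borel_open ennreal_leI mus_mono)
    qed
    show "(INF U\<in>{U. open U \<and> A \<subseteq> U}. emeasure mu U) \<le> emeasure mu A"
    proof (rule ennreal_le_epsilon)
      fix e :: real assume e: "0 < e"
      obtain U where U: "open U" "A \<subseteq> U" "mu0 U < mus A + e" using mus_approx[OF e] by blast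
      have "(INF U\<in>{U. open U \<and> A \<subseteq> U}. emeasure mu U) \<le> emeasure mu U"
        by (rule INF_lower) (use U in auto)
      also have "\<dots> = ennreal (mu0 U)" using U by (simp add: mu_emeasure borel_open mus_open)
      also have "\<dots> \<le> ennreal (mus A + e)" using U by (simp add: ennreal_leI)
      also have "\<dots> = emeasure mu A + ennreal e" using A e by (simp add: mu_emeasure ennreal_plus mus_nonneg)
      finally show "(INF U\<in>{U. open U \<and> A \<subseteq> U}. emeasure mu U) \<le> emeasure mu A + ennreal e" .
    qed
  qed
  show "emeasure mu A = (SUP K\<in>{K. compact K \<and> K \<subseteq> A}. emeasure mu K)"
  proof (rule antisym)
    show "(SUP K\<in>{K. compact K \<and> K \<subseteq> A}. emeasure mu K) \<le> emeasure mu A"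
    proof (rule SUP_least)
      fix K assume "K \<in> {K. compact K \<and> K \<subseteq> A}"
      hence K: "compact K" "K \<subseteq> A" by auto
      thus "emeasure mu K \<le> emeasure mu A" using A
        by (simp add: mu_emeasure borel_compact ennreal_leI mus_mono)
    qed
    show "emeasure mu A \<le> (SUP K\<in>{K. compact K \<and> K \<subseteq> A}. emeasure mu K)"
    proof (rule ennreal_le_epsilon)
      fix e :: real assume e: "0 < e"
      obtain U where U: "open U" "-A \<subseteq> U" "mu0 U < mus (-A) + e" using mus_approx[OF e] by blast
      have cA: "-A \<in> sets borel" using A by auto
      have KA: "-U \<subseteq> A" using U by auto
      have cK: "compact (-U)" using compact_Int_closed[OF cpt, of "-U"] U by auto
      have s1: "mus A + mus (-A) = mus UNIV" by (rule borel_split[OF A])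
      have s2: "mus (-U) + mus U = mus UNIV" using borel_split[of "-U"] U by (simp add: borel_closed)
      have "mus A \<le> mus (-U) + e" using s1 s2 U mus_open[OF U(1)] by linarith
      hence "emeasure mu A \<le> ennreal (mus (-U) + e)" using A by (simp add: mu_emeasure ennreal_leI)
      also have "\<dots> = emeasure mu (-U) + ennreal e" using U e
        by (simp add: mu_emeasure borel_closed ennreal_plus mus_nonneg)
      also have "emeasure mu (-U) \<le> (SUP K\<in>{K. compact K \<and> K \<subseteq> A}. emeasure mu K)"
        by (rule SUP_upper) (use cK KA in auto)
      finally show "emeasure mu A \<le> (SUP K\<in>{K. compact K \<and> K \<subseteq> A}. emeasure mu K) + ennreal e"
        by (simp add: add_right_mono)
    qed
  qed
qed

end


lemma clamp_sum: "0 \<le> y \<Longrightarrow> (\<Sum>k<n. min 1 (max 0 (y - real k))) = min y (real n)"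
proof (induction n)
  case 0 thus ?case by simp
next
  case (Suc n)
  have "(\<Sum>k<Suc n. min 1 (max 0 (y - real k))) = min y (real n) + min 1 (max 0 (y - real n))"
    using Suc by simp
  also have "\<dots> = min y (real (Suc n))"
    by (cases "y \<le> real n") (auto simp: min_def max_def)
  finally show ?case .
qed

lemma lim_alpha:
  fixes m c :: real
  assumes "c \<ge> 0" "\<And>a. 0 < a \<Longrightarrow> a < 1 \<Longrightarrow> m \<le> c / a"
  shows "m \<le> c"
proof (rule ccontr)
  assume "\<not> m \<le> c"
  hence mc: "c < m" by simp
  hence m0: "m > 0" using assms(1) by linarith
  define a where "a = (c + m) / (2 * m)"
  have a0: "0 < a" unfolding a_def using m0 assms(1) by (simp add: add_nonneg_pos)
  have a1: "a < 1" unfolding a_def using m0 mc by (simp add: field_simps)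
  have "m \<le> c / a" by (rule assms(2)[OF a0 a1])
  hence "m * a \<le> c" using a0 by (simp add: field_simps)
  hence "m * (c + m) \<le> c * (2 * m)" unfolding a_def using m0 by (simp add: field_simps)
  hence "m * m \<le> c * m" by (simp add: algebra_simps)
  hence "m \<le> c" using m0 by simp
  thus False using mc by simp
qed

context rz begin

lemma mus_le_L:
  assumes K: "closed K" and g: "continuous_on UNIV g" "\<And>x. g x \<ge> 0" "\<And>x. x \<in> K \<Longrightarrow> g x \<ge> 1"
  shows "mus K \<le> L g"
proof (rule lim_alpha)
  show "0 \<le> L g" using Lpos[OF g(1)] g(2) by blast
next
  fix a :: real assume a0: "0 < a" and a1: "a < 1"
  define U where "U = {x. a < g x}"
  have U: "open U" unfolding U_def using g(1) by (intro open_Collect_less) (auto intro: continuous_intros)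
  have KU: "K \<subseteq> U" unfolding U_def using g(3) a1 by force
  have "mu0 U \<le> L g / a"
  proof (rule mu0_least)
    fix h assume ph: "prec h U"
    obtain Kh where Kh: "closed Kh" "Kh \<subseteq> U" "\<forall>x. x \<notin> Kh \<longrightarrow> h x = 0"
      and hc: "continuous_on UNIV h" and h01: "\<forall>x. 0 \<le> h x \<and> h x \<le> 1" using ph unfolding prec_def by blast
    have "\<And>x. h x \<le> (1/a) * g x"
    proof -
      fix x show "h x \<le> (1/a) * g x"
      proof (cases "x \<in> U")
        case True
        hence "1 < (1/a) * g x" unfolding U_def using a0 by (simp add: field_simps)
        thus ?thesis using h01 by (meson less_imp_le order_trans)
      next
        case False
        hence "h x = 0" using Kh by auto
        thus ?thesis using g(2)[of x] a0 by simp
      qed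
    qed
    moreover have gc2: "continuous_on UNIV (\<lambda>x. (1/a) * g x)" using g(1) by (intro continuous_intros)
    ultimately have "L h \<le> L (\<lambda>x. (1/a) * g x)" using Lmono[OF hc gc2] by blast
    also have "\<dots> = (1/a) * L g" by (rule Lhom[OF g(1)])
    also have "\<dots> = L g / a" by simp
    finally show "L h \<le> L g / a" .
  qed
  moreover have "mus K \<le> mu0 U" by (rule mus_lower[OF U KU])
  ultimately show "mus K \<le> L g / a" by simp
qed

lemma L_le_mus:
  assumes K: "closed K" and h: "continuous_on UNIV h" "\<And>x. 0 \<le> h x \<and> h x \<le> 1" "\<And>x. x \<notin> K \<Longrightarrow> h x = 0"
  shows "L h \<le> mus K"
proof (rule mus_greatest)
  fix U assume "open U" "K \<subseteq> U"
  hence "prec h U" unfolding prec_def using K h by blast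
  thus "L h \<le> mu0 U" by (rule mu0_upper)
qed

lemma cont_meas: "continuous_on UNIV g \<Longrightarrow> (g::'a \<Rightarrow> real) \<in> borel_measurable mu"
  using borel_measurable_continuous_onI measurable_cong_sets[OF mu_sets refl] by blast

lemma cont_bounded: "continuous_on UNIV (g::'a \<Rightarrow> real) \<Longrightarrow> \<exists>B. \<forall>x. \<bar>g x\<bar> \<le> B"
proof -
  assume "continuous_on UNIV g"
  hence "compact (g ` UNIV)" using compact_continuous_image cpt by blast
  hence "bounded (g ` UNIV)" by (rule compact_imp_bounded)
  then obtain B where "\<forall>y\<in>g ` UNIV. norm y \<le> B" unfolding bounded_iff by blast
  thus ?thesis by auto
qed

lemma cont_integrable: "continuous_on UNIV g \<Longrightarrow> integrable mu (g::'a \<Rightarrow> real)"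
proof -
  assume gc: "continuous_on UNIV g"
  obtain B where B: "\<forall>x. \<bar>g x\<bar> \<le> B" using cont_bounded[OF gc] by blast
  show ?thesis
    by (rule finite_measure.integrable_const_bound[OF mu_finite, of _ B]) (use B cont_meas[OF gc] in auto)
qed

lemma closed_ge: "continuous_on UNIV (f::'a \<Rightarrow> real) \<Longrightarrow> closed {x. t \<le> f x}"
proof -
  assume fc: "continuous_on UNIV f"
  have "continuous_on UNIV (\<lambda>x::'a. t)" by simp
  from closed_Collect_le[OF this fc] show ?thesis .
qed

lemma int_ind: "closed A \<Longrightarrow> integral\<^sup>L mu (indicator A :: 'a \<Rightarrow> real) = mus A"
proof -
  assume A: "closed A"
  hence Ab: "A \<in> sets mu" using mu_sets borel_closed by blast
  have "integral\<^sup>L mu (indicator A :: 'a \<Rightarrow> real) = measure mu A"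
    using Bochner_Integration.integral_indicator[of mu A] mu_space by simp
  thus ?thesis using mu_measure A borel_closed by simp
qed

lemma rep01:
  assumes fc: "continuous_on UNIV f" and f01: "\<And>x. 0 \<le> f x \<and> f x \<le> 1"
  shows "integral\<^sup>L mu f = L f"
proof -
  have bound: "\<bar>integral\<^sup>L mu f - L f\<bar> \<le> L (\<lambda>x. 1) / real n" if n: "n > 0" for n :: nat
  proof -
    define fk where "fk k = (\<lambda>x. min 1 (max 0 (real n * f x - real k)))" for k :: nat
    define m where "m j = mus {x. real j / real n \<le> f x}" for j :: nat
    have fkc: "continuous_on UNIV (fk k)" for k unfolding fk_def using fc by (intro continuous_intros)
    have fk01: "0 \<le> fk k x \<and> fk k x \<le> 1" for k x unfolding fk_def by auto
    have fk0: "fk k x = 0" if "x \<notin> {x. real k / real n \<le> f x}" for k x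
    proof -
      have "f x < real k / real n" using that by simp
      hence "real n * f x < real k" using n by (simp add: field_simps)
      thus ?thesis unfolding fk_def by simp
    qed
    have fk1: "fk k x = 1" if "x \<in> {x. real (Suc k) / real n \<le> f x}" for k x
    proof -
      have "real (Suc k) / real n \<le> f x" using that by simp
      hence "real (Suc k) \<le> real n * f x" using n by (simp add: field_simps)
      thus ?thesis unfolding fk_def by simp
    qed
    have sumfk: "(\<lambda>x. f x) = (\<lambda>x. (1 / real n) * (\<Sum>k<n. fk k x))"
    proof
      fix x
      have "(\<Sum>k<n. fk k x) = min (real n * f x) (real n)" unfolding fk_def
        by (rule clamp_sum) (use f01[of x] in simp)
      also have "\<dots> = real n * f x" using f01[of x] by (simp add: mult_left_le)
      finally show "f x = (1 / real n) * (\<Sum>k<n. fk k x)" using n by simp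
    qed
    have cl: "closed {x. real j / real n \<le> f x}" for j by (rule closed_ge[OF fc])
    have Lk: "m (Suc k) \<le> L (fk k) \<and> L (fk k) \<le> m k" for k
    proof
      show "m (Suc k) \<le> L (fk k)" unfolding m_def
        by (rule mus_le_L[OF cl fkc]) (use fk01 fk1 in auto)
      show "L (fk k) \<le> m k" unfolding m_def
        by (rule L_le_mus[OF cl fkc]) (use fk01 fk0 in auto)
    qed
    have Ik: "m (Suc k) \<le> integral\<^sup>L mu (fk k) \<and> integral\<^sup>L mu (fk k) \<le> m k" for k
    proof
      have "integral\<^sup>L mu (indicator {x. real (Suc k) / real n \<le> f x}) \<le> integral\<^sup>L mu (fk k)"
      proof (rule integral_mono)
        show "integrable mu (indicator {x. real (Suc k) / real n \<le> f x} :: 'a \<Rightarrow> real)"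
          using cl[of "Suc k"] mu_sets borel_closed mu_finite
          by (intro finite_measure.integrable_const_bound[OF mu_finite, of _ 1])
             (auto intro: borel_measurable_indicator simp: indicator_def)
        show "integrable mu (fk k)" by (rule cont_integrable[OF fkc])
        fix x show "indicator {x. real (Suc k) / real n \<le> f x} x \<le> fk k x"
          using fk1[of x k] fk01[of k x] by (auto simp: indicator_def)
      qed
      moreover have "integral\<^sup>L mu (indicator {x. real (Suc k) / real n \<le> f x}) = m (Suc k)"
        unfolding m_def by (rule int_ind[OF cl])
      ultimately show "m (Suc k) \<le> integral\<^sup>L mu (fk k)" by linarith
      have "integral\<^sup>L mu (fk k) \<le> integral\<^sup>L mu (indicator {x. real k / real n \<le> f x})"
      proof (rule integral_mono)
        show "integrable mu (indicator {x. real k / real n \<le> f x} :: 'a \<Rightarrow> real)"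
          using cl[of k] mu_sets borel_closed mu_finite
          by (intro finite_measure.integrable_const_bound[OF mu_finite, of _ 1])
             (auto intro: borel_measurable_indicator simp: indicator_def)
        show "integrable mu (fk k)" by (rule cont_integrable[OF fkc])
        fix x show "fk k x \<le> indicator {x. real k / real n \<le> f x} x"
          using fk0[of x k] fk01[of k x] by (auto simp: indicator_def)
      qed
      moreover have "integral\<^sup>L mu (indicator {x. real k / real n \<le> f x}) = m k"
        unfolding m_def by (rule int_ind[OF cl])
      ultimately show "integral\<^sup>L mu (fk k) \<le> m k" by linarith
    qed
    have Lf: "L f = (1 / real n) * (\<Sum>k<n. L (fk k))"
    proof -
      have "L f = L (\<lambda>x. (1 / real n) * (\<Sum>k<n. fk k x))" using sumfk by (metis (no_types))
      also have "\<dots> = (1 / real n) * L (\<lambda>x. \<Sum>k<n. fk k x)"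
        by (rule Lhom) (intro continuous_on_sum fkc)
      also have "L (\<lambda>x. \<Sum>k<n. fk k x) = (\<Sum>k<n. L (fk k))" by (rule Lsum) (auto intro: fkc)
      finally show ?thesis .
    qed
    have If: "integral\<^sup>L mu f = (1 / real n) * (\<Sum>k<n. integral\<^sup>L mu (fk k))"
    proof -
      have "integral\<^sup>L mu f = integral\<^sup>L mu (\<lambda>x. (1 / real n) * (\<Sum>k<n. fk k x))" using sumfk by (metis (no_types))
      also have "\<dots> = (1 / real n) * integral\<^sup>L mu (\<lambda>x. \<Sum>k<n. fk k x)" by (rule integral_mult_right_zero)
      also have "integral\<^sup>L mu (\<lambda>x. \<Sum>k<n. fk k x) = (\<Sum>k<n. integral\<^sup>L mu (fk k))"
        by (rule Bochner_Integration.integral_sum) (auto intro: cont_integrable fkc)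
      finally show ?thesis .
    qed
    have "(\<Sum>k<n. m (Suc k)) \<le> (\<Sum>k<n. L (fk k))" "(\<Sum>k<n. L (fk k)) \<le> (\<Sum>k<n. m k)"
      "(\<Sum>k<n. m (Suc k)) \<le> (\<Sum>k<n. integral\<^sup>L mu (fk k))" "(\<Sum>k<n. integral\<^sup>L mu (fk k)) \<le> (\<Sum>k<n. m k)"
      using Lk Ik by (auto intro: sum_mono)
    moreover have "(\<Sum>k<n. m k) - (\<Sum>k<n. m (Suc k)) = m 0 - m n"
      using sum_lessThan_telescope'[of m n] by (simp add: sum_subtractf)
    moreover have "m 0 \<le> L (\<lambda>x. 1)" "0 \<le> m n" unfolding m_def by (auto intro: mus_le1 mus_nonneg)
    ultimately have "\<bar>(\<Sum>k<n. integral\<^sup>L mu (fk k)) - (\<Sum>k<n. L (fk k))\<bar> \<le> L (\<lambda>x. 1)" by linarith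
    hence "\<bar>(1 / real n) * ((\<Sum>k<n. integral\<^sup>L mu (fk k)) - (\<Sum>k<n. L (fk k)))\<bar> \<le> L (\<lambda>x. 1) / real n"
      using n by (simp add: abs_mult divide_right_mono)
    thus ?thesis using Lf If by (simp add: right_diff_distrib)
  qed
  show ?thesis
  proof (rule ccontr)
    assume ne: "integral\<^sup>L mu f \<noteq> L f"
    define d where "d = \<bar>integral\<^sup>L mu f - L f\<bar>"
    have d: "d > 0" using ne unfolding d_def by simp
    obtain n :: nat where n: "L (\<lambda>x. 1) / d < real n" using reals_Archimedean2 by blast
    have L1: "L (\<lambda>x. 1) \<ge> 0" using Lpos[of "\<lambda>x. 1"] by simp
    have n0: "n > 0" using n L1 d by (metis divide_nonneg_pos not_gr0 not_less of_nat_0)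
    have "d \<le> L (\<lambda>x. 1) / real n" using bound[OF n0] unfolding d_def .
    hence "d * real n \<le> L (\<lambda>x. 1)" using n0 by (simp add: field_simps)
    moreover have "L (\<lambda>x. 1) < d * real n" using n d by (simp add: field_simps)
    ultimately show False by simp
  qed
qed

lemma rep:
  assumes fc: "continuous_on UNIV f"
  shows "integral\<^sup>L mu f = L f"
proof -
  obtain B0 where B0: "\<forall>x. \<bar>f x\<bar> \<le> B0" using cont_bounded[OF fc] by blast
  define B where "B = B0 + 1"
  have "0 \<le> B0" using B0 by (meson abs_ge_zero order_trans)
  hence B1: "B > 0" unfolding B_def by simp
  have B2: "\<bar>f x\<bar> < B" for x using spec[OF B0, of x] unfolding B_def by linarith
  note B = B1 B2
  define g where "g = (\<lambda>x. (f x + B) / (2 * B))"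
  have gc: "continuous_on UNIV g" unfolding g_def using fc B by (intro continuous_intros) auto
  have g01: "0 \<le> g x \<and> g x \<le> 1" for x
    using B(1) B(2)[of x] unfolding g_def by (auto simp: field_simps abs_less_iff)
  have oc: "continuous_on UNIV (\<lambda>x::'a. 1::real)" by simp
  have feq: "f = (\<lambda>x. (2 * B) * g x + (- B) * 1)"
    using B(1) unfolding g_def by (auto simp: field_simps)
  have Ig: "integral\<^sup>L mu g = L g" by (rule rep01[OF gc g01])
  have I1: "integral\<^sup>L mu (\<lambda>x. 1) = L (\<lambda>x. 1)" by (rule rep01[OF oc]) simp
  have "integral\<^sup>L mu (\<lambda>x. (2 * B) * g x + (- B) * 1) = (2 * B) * integral\<^sup>L mu g + (- B) * integral\<^sup>L mu (\<lambda>x. 1)"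
    by (subst Bochner_Integration.integral_add) (auto intro: cont_integrable gc oc)
  also have "\<dots> = (2 * B) * L g + (- B) * L (\<lambda>x. 1)" using Ig I1 by simp
  also have "\<dots> = L (\<lambda>x. (2 * B) * g x + (- B) * 1)"
  proof -
    have "L (\<lambda>x. (2 * B) * g x + (- B) * 1) = L (\<lambda>x. (2 * B) * g x) + L (\<lambda>x. (- B) * 1)"
      by (rule Ladd) (auto intro: continuous_intros gc)
    also have "\<dots> = (2 * B) * L g + (- B) * L (\<lambda>x. 1)"
      using Lhom[OF gc, of "2*B"] Lhom[OF oc, of "-B"] by simp
    finally show ?thesis by simp
  qed
  finally show ?thesis using feq by simp
qed

theorem riesz: "\<exists>M. regular_fin_borel M \<and> (\<forall>f. continuous_on UNIV f \<longrightarrow> integral\<^sup>L M f = L f)"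
  using mu_regular rep by blast

end


lemma cont_bnd: "compact (UNIV::'a::topological_space set) \<Longrightarrow> continuous_on UNIV (g::'a \<Rightarrow> real) \<Longrightarrow> \<exists>B. \<forall>x. \<bar>g x\<bar> \<le> B"
proof -
  assume cpt: "compact (UNIV::'a set)" and gc: "continuous_on UNIV g"
  hence "compact (g ` UNIV)" using compact_continuous_image by blast
  hence "bounded (g ` UNIV)" by (rule compact_imp_bounded)
  then obtain B where "\<forall>y\<in>g ` UNIV. norm y \<le> B" unfolding bounded_iff by blast
  thus ?thesis by auto
qed

locale rfb =
  fixes M :: "'a::t2_space measure"
  assumes cpt: "compact (UNIV::'a set)" and reg: "regular_fin_borel M"
begin

lemma sets_M: "sets M = sets borel" using reg unfolding regular_fin_borel_def by blast
lemma space_M: "space M = UNIV" using sets_eq_imp_space_eq[OF sets_M] by simp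
lemma fin: "finite_measure M" using reg unfolding regular_fin_borel_def by blast
lemma em: "emeasure M A = ennreal (measure M A)" using finite_measure.emeasure_eq_measure[OF fin] .

lemma integ: "continuous_on UNIV f \<Longrightarrow> integrable M (f::'a \<Rightarrow> real)"
proof -
  assume gc: "continuous_on UNIV f"
  obtain B where B: "\<forall>x. \<bar>f x\<bar> \<le> B" using cont_bnd[OF cpt gc] by blast
  have "f \<in> borel_measurable M"
    using borel_measurable_continuous_onI[OF gc] measurable_cong_sets[OF sets_M refl] by blast
  thus ?thesis
    by (intro finite_measure.integrable_const_bound[OF fin, of _ B]) (use B in auto)
qed

lemma outer:
  assumes A: "A \<in> sets borel" and e: "e > 0"
  shows "\<exists>U. open U \<and> A \<subseteq> U \<and> measure M U < measure M A + e"
proof -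
  have eq: "emeasure M A = (INF U\<in>{U. open U \<and> A \<subseteq> U}. emeasure M U)"
    using reg A unfolding regular_fin_borel_def by blast
  have "emeasure M A < ennreal (measure M A + e)" using e by (simp add: em ennreal_less_iff)
  hence "(INF U\<in>{U. open U \<and> A \<subseteq> U}. emeasure M U) < ennreal (measure M A + e)" using eq by simp
  then obtain U where U: "U \<in> {U. open U \<and> A \<subseteq> U}" "emeasure M U < ennreal (measure M A + e)"
    unfolding INF_less_iff by blast
  hence "measure M U < measure M A + e" by (simp add: em ennreal_less_iff)
  thus ?thesis using U by blast
qed

lemma inner:
  assumes A: "A \<in> sets borel" and e: "e > 0"
  shows "\<exists>K. compact K \<and> K \<subseteq> A \<and> measure M A < measure M K + e"
proof (cases "measure M A < e")
  case True thus ?thesis by (intro exI[of _ "{}"]) simp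
next
  case False
  have eq: "emeasure M A = (SUP K\<in>{K. compact K \<and> K \<subseteq> A}. emeasure M K)"
    using reg A unfolding regular_fin_borel_def by blast
  have "ennreal (measure M A - e) < emeasure M A" using e False by (simp add: em ennreal_less_iff)
  hence "ennreal (measure M A - e) < (SUP K\<in>{K. compact K \<and> K \<subseteq> A}. emeasure M K)" using eq by simp
  then obtain K where K: "K \<in> {K. compact K \<and> K \<subseteq> A}" "ennreal (measure M A - e) < emeasure M K"
    unfolding less_SUP_iff by blast
  hence "measure M A - e < measure M K" using False by (simp add: em ennreal_less_iff)
  thus ?thesis using K by force
qed

lemma int_le_meas:
  assumes fc: "continuous_on UNIV f" and f: "\<And>x. f x \<le> 1" and U: "U \<in> sets borel" "\<And>x. x \<notin> U \<Longrightarrow> f x \<le> 0"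
  shows "integral\<^sup>L M f \<le> measure M U"
proof -
  have "integral\<^sup>L M f \<le> integral\<^sup>L M (indicator U :: 'a \<Rightarrow> real)"
  proof (rule integral_mono)
    show "integrable M f" by (rule integ[OF fc])
    show "integrable M (indicator U :: 'a \<Rightarrow> real)"
      using U(1) sets_M fin by (intro finite_measure.integrable_const_bound[OF fin, of _ 1])
         (auto intro: borel_measurable_indicator simp: indicator_def)
    fix x show "f x \<le> indicator U x" using f[of x] U(2)[of x] by (auto simp: indicator_def)
  qed
  also have "\<dots> = measure M U" using Bochner_Integration.integral_indicator[of M U] space_M by simp
  finally show ?thesis .
qed

lemma meas_le_int:
  assumes fc: "continuous_on UNIV f" and f: "\<And>x. f x \<ge> 0" and K: "K \<in> sets borel" "\<And>x. x \<in> K \<Longrightarrow> f x \<ge> 1"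
  shows "measure M K \<le> integral\<^sup>L M f"
proof -
  have "measure M K = integral\<^sup>L M (indicator K :: 'a \<Rightarrow> real)"
    using Bochner_Integration.integral_indicator[of M K] space_M by simp
  also have "\<dots> \<le> integral\<^sup>L M f"
  proof (rule integral_mono)
    show "integrable M f" by (rule integ[OF fc])
    show "integrable M (indicator K :: 'a \<Rightarrow> real)"
      using K(1) sets_M fin by (intro finite_measure.integrable_const_bound[OF fin, of _ 1])
         (auto intro: borel_measurable_indicator simp: indicator_def)
    fix x show "indicator K x \<le> f x" using f[of x] K(2)[of x] by (auto simp: indicator_def)
  qed
  finally show ?thesis .
qed

end

lemma uniq_compact:
  assumes cpt: "compact (UNIV::'a::t2_space set)"
    and R: "regular_fin_borel R" and M: "regular_fin_borel M" and N: "regular_fin_borel (N::'a measure)"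
    and ab: "a \<ge> 0" "b \<ge> 0"
    and I: "\<And>f. continuous_on UNIV f \<Longrightarrow> integral\<^sup>L R f = a * integral\<^sup>L M f + b * integral\<^sup>L N f"
    and K: "compact K"
  shows "measure R K = a * measure M K + b * measure N K"
proof -
  interpret R: rfb R using cpt R by unfold_locales
  interpret M: rfb M using cpt M by unfold_locales
  interpret N: rfb N using cpt N by unfold_locales
  have Kc: "closed K" using K compact_imp_closed by blast
  have Kb: "K \<in> sets borel" using Kc by (simp add: borel_closed)
  have uf: "\<exists>f. continuous_on UNIV f \<and> (\<forall>x. 0 \<le> f x \<and> f x \<le> (1::real)) \<and> (\<forall>x\<in>K. f x = 1) \<and> (\<forall>x\<in>-U. f x = 0)"
    if "open U" "K \<subseteq> U" for U
    using urysohn_fun[OF cpt Kc, of "-U"] that by auto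
  have le1: "measure R K \<le> a * measure M K + b * measure N K + (a + b) * e" if e: "e > 0" for e
  proof -
    obtain U1 where U1: "open U1" "K \<subseteq> U1" "measure M U1 < measure M K + e" using M.outer[OF Kb e] by blast
    obtain U2 where U2: "open U2" "K \<subseteq> U2" "measure N U2 < measure N K + e" using N.outer[OF Kb e] by blast
    obtain f where f: "continuous_on UNIV f" "\<forall>x. 0 \<le> f x \<and> f x \<le> (1::real)" "\<forall>x\<in>K. f x = 1" "\<forall>x\<in>-(U1 \<inter> U2). f x = 0"
      using uf[of "U1 \<inter> U2"] U1 U2 by blast
    have "measure R K \<le> integral\<^sup>L R f" by (rule R.meas_le_int[OF f(1) _ Kb]) (use f in auto)
    also have "\<dots> = a * integral\<^sup>L M f + b * integral\<^sup>L N f" by (rule I[OF f(1)])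
    also have "integral\<^sup>L M f \<le> measure M U1"
      by (rule M.int_le_meas[OF f(1)]) (use f U1 in \<open>auto simp: borel_open\<close>)
    also have "integral\<^sup>L N f \<le> measure N U2"
      by (rule N.int_le_meas[OF f(1)]) (use f U2 in \<open>auto simp: borel_open\<close>)
    finally have "measure R K \<le> a * measure M U1 + b * measure N U2"
      using ab by (simp add: add_mono mult_left_mono)
    also have "\<dots> \<le> a * (measure M K + e) + b * (measure N K + e)"
      using ab U1 U2 by (intro add_mono mult_left_mono) auto
    finally show ?thesis by (simp add: algebra_simps)
  qed
  have le2: "a * measure M K + b * measure N K \<le> measure R K + e" if e: "e > 0" for e
  proof -
    obtain U where U: "open U" "K \<subseteq> U" "measure R U < measure R K + e" using R.outer[OF Kb e] by blast
    obtain f where f: "continuous_on UNIV f" "\<forall>x. 0 \<le> f x \<and> f x \<le> (1::real)" "\<forall>x\<in>K. f x = 1" "\<forall>x\<in>-U. f x = 0"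
      using uf[of U] U by blast
    have "measure M K \<le> integral\<^sup>L M f" by (rule M.meas_le_int[OF f(1) _ Kb]) (use f in auto)
    moreover have "measure N K \<le> integral\<^sup>L N f" by (rule N.meas_le_int[OF f(1) _ Kb]) (use f in auto)
    ultimately have "a * measure M K + b * measure N K \<le> a * integral\<^sup>L M f + b * integral\<^sup>L N f"
      using ab by (intro add_mono mult_left_mono) auto
    also have "\<dots> = integral\<^sup>L R f" by (rule I[OF f(1), symmetric])
    also have "\<dots> \<le> measure R U"
      by (rule R.int_le_meas[OF f(1)]) (use f U in \<open>auto simp: borel_open\<close>)
    finally show ?thesis using U by simp
  qed
  have "measure R K \<le> a * measure M K + b * measure N K"
  proof (rule eps_le[of "a + b + 1"])
    show "0 < a + b + 1" using ab by simp
    fix e :: real assume e: "e > 0"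
    show "measure R K \<le> a * measure M K + b * measure N K + (a + b + 1) * e"
      using le1[OF e] e by (simp add: algebra_simps)
  qed
  moreover have "a * measure M K + b * measure N K \<le> measure R K"
  proof (rule eps_le[of 1])
    fix e :: real assume e: "e > 0"
    show "a * measure M K + b * measure N K \<le> measure R K + 1 * e" using le2[OF e] by simp
  qed simp
  ultimately show ?thesis by simp
qed

lemma uniq_borel:
  assumes cpt: "compact (UNIV::'a::t2_space set)"
    and R: "regular_fin_borel R" and M: "regular_fin_borel M" and N: "regular_fin_borel (N::'a measure)"
    and ab: "a \<ge> 0" "b \<ge> 0"
    and I: "\<And>f. continuous_on UNIV f \<Longrightarrow> integral\<^sup>L R f = a * integral\<^sup>L M f + b * integral\<^sup>L N f"
    and A: "A \<in> sets borel"
  shows "measure R A = a * measure M A + b * measure N A"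
proof -
  interpret R: rfb R using cpt R by unfold_locales
  interpret M: rfb M using cpt M by unfold_locales
  interpret N: rfb N using cpt N by unfold_locales
  have UK: "measure R K = a * measure M K + b * measure N K" if "compact K" for K
    by (rule uniq_compact[OF cpt R M N ab I that])
  have mono: "measure Q K \<le> measure Q A" if "K \<subseteq> A" "compact K" "rfb Q" for Q K
  proof -
    interpret Q: rfb Q by fact
    show ?thesis using that A compact_imp_closed[OF that(2)]
      by (intro finite_measure.finite_measure_mono[OF Q.fin]) (auto simp: Q.sets_M borel_closed)
  qed
  have R_rfb: "rfb R" "rfb M" "rfb N" using cpt R M N by (auto simp: rfb_def)
  have "measure R A \<le> a * measure M A + b * measure N A"
  proof (rule eps_le[of 1])
    fix e :: real assume e: "e > 0"
    obtain K where K: "compact K" "K \<subseteq> A" "measure R A < measure R K + e" using R.inner[OF A e] by blast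
    have "measure R K = a * measure M K + b * measure N K" by (rule UK[OF K(1)])
    also have "\<dots> \<le> a * measure M A + b * measure N A"
      using ab mono[OF K(2,1) R_rfb(2)] mono[OF K(2,1) R_rfb(3)] by (intro add_mono mult_left_mono) auto
    finally show "measure R A \<le> a * measure M A + b * measure N A + 1 * e" using K(3) by simp
  qed simp
  moreover have "a * measure M A + b * measure N A \<le> measure R A"
  proof (rule eps_le[of "a + b + 1"])
    show "0 < a + b + 1" using ab by simp
    fix e :: real assume e: "e > 0"
    obtain K1 where K1: "compact K1" "K1 \<subseteq> A" "measure M A < measure M K1 + e" using M.inner[OF A e] by blast
    obtain K2 where K2: "compact K2" "K2 \<subseteq> A" "measure N A < measure N K2 + e" using N.inner[OF A e] by blast
    have K: "compact (K1 \<union> K2)" "K1 \<union> K2 \<subseteq> A" using K1 K2 by auto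
    have "measure M K1 \<le> measure M (K1 \<union> K2)"
      using K1 K2 by (intro finite_measure.finite_measure_mono[OF M.fin]) (auto simp: M.sets_M borel_compact)
    moreover have "measure N K2 \<le> measure N (K1 \<union> K2)"
      using K1 K2 by (intro finite_measure.finite_measure_mono[OF N.fin]) (auto simp: N.sets_M borel_compact)
    ultimately have "a * measure M A + b * measure N A \<le> a * (measure M (K1 \<union> K2) + e) + b * (measure N (K1 \<union> K2) + e)"
      using ab K1 K2 by (intro add_mono mult_left_mono) auto
    also have "\<dots> = measure R (K1 \<union> K2) + (a + b) * e" using UK[OF K(1)] by (simp add: algebra_simps)
    also have "\<dots> \<le> measure R A + (a + b) * e" using mono[OF K(2,1) R_rfb(1)] by simp
    finally show "a * measure M A + b * measure N A \<le> measure R A + (a + b + 1) * e"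
      using e by (simp add: algebra_simps)
  qed
  ultimately show ?thesis by simp
qed

lemma riesz_comb:
  assumes cpt: "compact (UNIV::'a::t2_space set)"
    and M: "regular_fin_borel M" and N: "regular_fin_borel (N::'a measure)"
    and ab: "a \<ge> 0" "b \<ge> 0"
  shows "\<exists>R. regular_fin_borel R \<and> (\<forall>f. continuous_on UNIV f \<longrightarrow> integral\<^sup>L R f = a * integral\<^sup>L M f + b * integral\<^sup>L N f)
     \<and> (\<forall>A\<in>sets borel. measure R A = a * measure M A + b * measure N A)"
proof -
  interpret M: rfb M using cpt M by unfold_locales
  interpret N: rfb N using cpt N by unfold_locales
  interpret rz "\<lambda>f. a * integral\<^sup>L M f + b * integral\<^sup>L N f"
  proof
    show "compact (UNIV::'a set)" by (rule cpt)
    fix f g :: "'a \<Rightarrow> real" and c :: real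
    assume fc: "continuous_on UNIV f"
    show "a * integral\<^sup>L M (\<lambda>x. c * f x) + b * integral\<^sup>L N (\<lambda>x. c * f x) = c * (a * integral\<^sup>L M f + b * integral\<^sup>L N f)"
      by (simp add: algebra_simps)
    assume gc: "continuous_on UNIV g"
    show "a * integral\<^sup>L M (\<lambda>x. f x + g x) + b * integral\<^sup>L N (\<lambda>x. f x + g x) =
          a * integral\<^sup>L M f + b * integral\<^sup>L N f + (a * integral\<^sup>L M g + b * integral\<^sup>L N g)"
      using M.integ[OF fc] M.integ[OF gc] N.integ[OF fc] N.integ[OF gc]
      by (simp add: Bochner_Integration.integral_add algebra_simps)
  next
    fix f :: "'a \<Rightarrow> real" assume fc: "continuous_on UNIV f" and f0: "\<forall>x. 0 \<le> f x"
    have "0 \<le> integral\<^sup>L M f" "0 \<le> integral\<^sup>L N f" using f0 by (auto intro: Bochner_Integration.integral_nonneg)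
    thus "0 \<le> a * integral\<^sup>L M f + b * integral\<^sup>L N f" using ab by simp
  qed
  obtain R where R: "regular_fin_borel R" "\<forall>f. continuous_on UNIV f \<longrightarrow> integral\<^sup>L R f = a * integral\<^sup>L M f + b * integral\<^sup>L N f"
    using riesz by blast
  have "\<forall>A\<in>sets borel. measure R A = a * measure M A + b * measure N A"
    using uniq_borel[OF cpt R(1) M N ab] R(2) by blast
  thus ?thesis using R by blast
qed


lemma sep_cone:
  fixes V D :: "('x \<Rightarrow> real) set"
  assumes fs: "fsubspace V" and bnd: "\<And>v. v \<in> V \<Longrightarrow> \<exists>B. \<forall>x. \<bar>v x\<bar> \<le> B"
    and DV: "D \<subseteq> V" and D0: "(\<lambda>x. 0) \<in> D"
    and Dadd: "\<And>w1 w2. w1 \<in> D \<Longrightarrow> w2 \<in> D \<Longrightarrow> (\<lambda>x. w1 x + w2 x) \<in> D"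
    and Dsc: "\<And>w c. w \<in> D \<Longrightarrow> c \<ge> 0 \<Longrightarrow> (\<lambda>x. c * w x) \<in> D"
    and zV: "z \<in> V" and d: "\<delta> > 0" and far: "\<And>w. w \<in> D \<Longrightarrow> \<exists>x. \<delta> < \<bar>z x - w x\<bar>"
  shows "\<exists>L. (\<forall>f\<in>V. \<forall>g\<in>V. L (\<lambda>x. f x + g x) = L f + L g) \<and> (\<forall>f\<in>V. \<forall>c. L (\<lambda>x. c * f x) = c * L f)
           \<and> (\<forall>w\<in>D. L w \<le> 0) \<and> L z \<ge> \<delta> \<and> (\<forall>v\<in>V. \<forall>B. (\<forall>x. \<bar>v x\<bar> \<le> B) \<longrightarrow> L v \<le> B)"
proof -
  define Bs where "Bs v = {B. \<exists>w\<in>D. \<forall>x. \<bar>v x - w x\<bar> \<le> B}" for v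
  define dd where "dd v = Inf (Bs v)" for v
  have Bs_ne: "Bs v \<noteq> {}" if vV: "v \<in> V" for v
  proof -
    obtain B where "\<forall>x. \<bar>v x\<bar> \<le> B" using bnd[OF vV] by blast
    thus ?thesis unfolding Bs_def using D0 by force
  qed
  have Bs_nn: "B \<ge> 0" if BB: "B \<in> Bs v" for B v
  proof -
    obtain w where "\<forall>x. \<bar>v x - w x\<bar> \<le> B" using BB unfolding Bs_def by blast
    hence "\<bar>v undefined - w undefined\<bar> \<le> B" by blast
    thus ?thesis by (meson abs_ge_zero order_trans)
  qed
  have Bs_bdd: "bdd_below (Bs v)" for v unfolding bdd_below_def using Bs_nn by blast
  have dd_lower: "dd v \<le> B" if "B \<in> Bs v" for v B unfolding dd_def by (rule cInf_lower[OF that Bs_bdd])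
  have dd_greatest: "c \<le> dd v" if "v \<in> V" "\<And>B. B \<in> Bs v \<Longrightarrow> c \<le> B" for v c
    unfolding dd_def by (rule cInf_greatest[OF Bs_ne[OF that(1)]]) (use that in blast)
  have dd_approx: "\<exists>B\<in>Bs v. B < dd v + e" if "v \<in> V" "e > 0" for v e
  proof (rule ccontr)
    assume "\<not> (\<exists>B\<in>Bs v. B < dd v + e)"
    hence "dd v + e \<le> dd v" by (intro dd_greatest[OF that(1)]) (meson not_less)
    thus False using that(2) by simp
  qed
  have dd_nn: "0 \<le> dd v" if "v \<in> V" for v by (rule dd_greatest[OF that Bs_nn])
  have sub: "dd (\<lambda>x. f x + g x) \<le> dd f + dd g" if f: "f \<in> V" and g: "g \<in> V" for f g
  proof (rule eps_le[of 2])
    fix e :: real assume e: "e > 0"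
    obtain B1 where B1: "B1 \<in> Bs f" "B1 < dd f + e" using dd_approx[OF f e] by blast
    obtain B2 where B2: "B2 \<in> Bs g" "B2 < dd g + e" using dd_approx[OF g e] by blast
    obtain w1 where w1: "w1 \<in> D" "\<forall>x. \<bar>f x - w1 x\<bar> \<le> B1" using B1(1) unfolding Bs_def by blast
    obtain w2 where w2: "w2 \<in> D" "\<forall>x. \<bar>g x - w2 x\<bar> \<le> B2" using B2(1) unfolding Bs_def by blast
    have "\<forall>x. \<bar>(f x + g x) - (w1 x + w2 x)\<bar> \<le> B1 + B2"
    proof
      fix x show "\<bar>(f x + g x) - (w1 x + w2 x)\<bar> \<le> B1 + B2"
        using w1(2)[rule_format, of x] w2(2)[rule_format, of x] by linarith
    qed
    hence "B1 + B2 \<in> Bs (\<lambda>x. f x + g x)" unfolding Bs_def using Dadd[OF w1(1) w2(1)]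
      by (intro CollectI bexI[of _ "\<lambda>x. w1 x + w2 x"]) auto
    hence "dd (\<lambda>x. f x + g x) \<le> B1 + B2" by (rule dd_lower)
    thus "dd (\<lambda>x. f x + g x) \<le> dd f + dd g + 2 * e" using B1 B2 by linarith
  qed simp
  have hom: "dd (\<lambda>x. c * f x) = c * dd f" if f: "f \<in> V" and c: "c \<ge> 0" for f c
  proof (cases "c = 0")
    case True
    have "0 \<in> Bs (\<lambda>x. 0 * f x)" unfolding Bs_def using D0 by force
    hence "dd (\<lambda>x. 0 * f x) \<le> 0" by (rule dd_lower)
    moreover have "(\<lambda>x. 0 * f x) \<in> V" using fs f unfolding fsubspace_def by blast
    ultimately show ?thesis using True dd_nn by force
  next
    case False
    hence c0: "c > 0" using c by simp
    have cfV: "(\<lambda>x. c * f x) \<in> V" using fs f unfolding fsubspace_def by blast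
    have "dd (\<lambda>x. c * f x) \<le> c * dd f"
    proof -
      have "dd f \<ge> dd (\<lambda>x. c * f x) / c"
      proof (rule dd_greatest[OF f])
        fix B assume "B \<in> Bs f"
        then obtain w where w: "w \<in> D" "\<forall>x. \<bar>f x - w x\<bar> \<le> B" unfolding Bs_def by blast
        have "\<forall>x. \<bar>c * f x - c * w x\<bar> \<le> c * B"
          using w(2) c0 by (simp add: right_diff_distrib[symmetric] abs_mult)
        hence "c * B \<in> Bs (\<lambda>x. c * f x)" unfolding Bs_def using Dsc[OF w(1) c]
          by (intro CollectI bexI[of _ "\<lambda>x. c * w x"]) auto
        hence "dd (\<lambda>x. c * f x) \<le> c * B" by (rule dd_lower)
        thus "dd (\<lambda>x. c * f x) / c \<le> B" using c0 by (simp add: field_simps)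
      qed
      thus ?thesis using c0 by (simp add: field_simps)
    qed
    moreover have "c * dd f \<le> dd (\<lambda>x. c * f x)"
    proof -
      have "dd f \<le> dd (\<lambda>x. c * f x) / c"
      proof -
        have "dd (\<lambda>x. c * f x) / c \<ge> dd f"
        proof -
          have "\<forall>B\<in>Bs (\<lambda>x. c * f x). dd f \<le> B / c"
          proof
            fix B assume "B \<in> Bs (\<lambda>x. c * f x)"
            then obtain w where w: "w \<in> D" "\<forall>x. \<bar>c * f x - w x\<bar> \<le> B" unfolding Bs_def by blast
            have "\<forall>x. \<bar>f x - (1/c) * w x\<bar> \<le> B / c"
            proof
              fix x
              have "\<bar>f x - (1/c) * w x\<bar> = \<bar>c * f x - w x\<bar> / c" using c0
                by (simp add: field_simps abs_div[symmetric])
              thus "\<bar>f x - (1/c) * w x\<bar> \<le> B / c" using w(2)[rule_format, of x] c0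
                by (simp add: divide_right_mono)
            qed
            hence "B / c \<in> Bs f" unfolding Bs_def using Dsc[OF w(1), of "1/c"] c0
              by (intro CollectI bexI[of _ "\<lambda>x. (1/c) * w x"]) auto
            thus "dd f \<le> B / c" by (rule dd_lower)
          qed
          hence "c * dd f \<le> dd (\<lambda>x. c * f x)"
            using dd_greatest[OF cfV, of "c * dd f"] c0 by (simp add: field_simps)
          thus ?thesis using c0 by (simp add: field_simps)
        qed
        thus ?thesis by simp
      qed
      thus ?thesis using c0 by (simp add: field_simps)
    qed
    ultimately show ?thesis by simp
  qed
  have sl: "sublin V dd" unfolding sublin_def using sub hom by blast
  obtain L where L: "\<forall>f\<in>V. \<forall>g\<in>V. L (\<lambda>x. f x + g x) = L f + L g" "\<forall>f\<in>V. \<forall>c. L (\<lambda>x. c * f x) = c * L f"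
    "\<forall>f\<in>V. L f \<le> dd f" "L z = dd z"
    using hahn_banach_fun[OF sl fs zV] by blast
  have "\<forall>w\<in>D. L w \<le> 0"
  proof
    fix w assume w: "w \<in> D"
    have "0 \<in> Bs w" unfolding Bs_def using w by force
    hence "dd w \<le> 0" by (rule dd_lower)
    thus "L w \<le> 0" using L(3) w DV by force
  qed
  moreover have "L z \<ge> \<delta>"
  proof -
    have "\<delta> \<le> dd z"
    proof (rule dd_greatest[OF zV])
      fix B assume "B \<in> Bs z"
      then obtain w where w: "w \<in> D" "\<forall>x. \<bar>z x - w x\<bar> \<le> B" unfolding Bs_def by blast
      obtain x where "\<delta> < \<bar>z x - w x\<bar>" using far[OF w(1)] by blast
      thus "\<delta> \<le> B" using w(2) by (meson less_imp_le order_trans)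
    qed
    thus ?thesis using L(4) by simp
  qed
  moreover have "\<forall>v\<in>V. \<forall>B. (\<forall>x. \<bar>v x\<bar> \<le> B) \<longrightarrow> L v \<le> B"
  proof (intro ballI allI impI)
    fix v B assume v: "v \<in> V" and B: "\<forall>x. \<bar>v x\<bar> \<le> B"
    have "B \<in> Bs v" unfolding Bs_def using D0 B by force
    hence "dd v \<le> B" by (rule dd_lower)
    thus "L v \<le> B" using L(3) v by force
  qed
  ultimately show ?thesis using L(1,2) by blast
qed

lemma mm1: "c \<ge> 0 \<Longrightarrow> max (c * a) 0 = c * max a (0::real)"
  by (cases "a \<ge> 0") (auto simp: max_def mult_le_0_iff zero_le_mult_iff)
lemma mm2: "c \<ge> 0 \<Longrightarrow> max (- (c * a)) 0 = c * max (- a) (0::real)"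
  by (cases "a \<ge> 0") (auto simp: max_def mult_le_0_iff zero_le_mult_iff)
lemma mm3: "c < 0 \<Longrightarrow> max (c * a) 0 = (- c) * max (- a) (0::real)"
  by (cases "a \<ge> 0") (auto simp: max_def mult_le_0_iff zero_le_mult_iff)
lemma mm4: "c < 0 \<Longrightarrow> max (- (c * a)) 0 = (- c) * max a (0::real)"
  by (cases "a \<ge> 0") (auto simp: max_def mult_le_0_iff zero_le_mult_iff)

lemma jordan:
  fixes L :: "('a::t2_space \<Rightarrow> real) \<Rightarrow> real"
  assumes cpt: "compact (UNIV::'a set)"
  and Ladd: "\<And>f g. continuous_on UNIV f \<Longrightarrow> continuous_on UNIV g \<Longrightarrow> L (\<lambda>x. f x + g x) = L f + L g"
  and Lhom: "\<And>f c. continuous_on UNIV f \<Longrightarrow> L (\<lambda>x. c * f x) = c * L f"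
  and Lbnd: "\<And>f B. continuous_on UNIV f \<Longrightarrow> (\<forall>x. \<bar>f x\<bar> \<le> B) \<Longrightarrow> L f \<le> B"
  shows "\<exists>L1 L2. rz L1 \<and> rz L2 \<and> (\<forall>f. continuous_on UNIV f \<longrightarrow> L f = L1 f - L2 f)"
proof -
  have L0: "L (\<lambda>x. 0) = 0" using Lhom[of "\<lambda>x. 0" 0] by simp
  define H where "H f = {L h | h. continuous_on UNIV h \<and> (\<forall>x. 0 \<le> h x \<and> h x \<le> f x)}" for f
  define P where "P f = Sup (H f)" for f
  have H_ne: "H f \<noteq> {}" if "\<forall>x. 0 \<le> f x" for f
  proof -
    have "L (\<lambda>x. 0) \<in> H f" unfolding H_def using that by force
    thus ?thesis by blast
  qed
  have H_bdd: "bdd_above (H f)" if fc: "continuous_on UNIV f" for f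
  proof -
    obtain B where B: "\<forall>x. \<bar>f x\<bar> \<le> B" using cont_bnd[OF cpt fc] by blast
    have "\<forall>y\<in>H f. y \<le> B"
    proof
      fix y assume "y \<in> H f"
      then obtain h where h: "y = L h" "continuous_on UNIV h" "\<forall>x. 0 \<le> h x \<and> h x \<le> f x"
        unfolding H_def by blast
      have "\<forall>x. \<bar>h x\<bar> \<le> B" using h(3) B by (metis abs_of_nonneg abs_ge_self order_trans)
      thus "y \<le> B" using Lbnd[OF h(2)] h(1) by simp
    qed
    thus ?thesis unfolding bdd_above_def by blast
  qed
  have P_upper: "L h \<le> P f" if "continuous_on UNIV f" "continuous_on UNIV h" "\<forall>x. 0 \<le> h x \<and> h x \<le> f x" for f h
    unfolding P_def by (rule cSup_upper[OF _ H_bdd[OF that(1)]]) (use that H_def in blast)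
  have P_least: "P f \<le> c" if f0: "\<forall>x. 0 \<le> f x" and hh: "\<And>h. continuous_on UNIV h \<Longrightarrow> \<forall>x. 0 \<le> h x \<and> h x \<le> f x \<Longrightarrow> L h \<le> c" for f c
    unfolding P_def
  proof (rule cSup_least[OF H_ne[OF f0]])
    fix y assume "y \<in> H f"
    then obtain h where "y = L h" "continuous_on UNIV h" "\<forall>x. 0 \<le> h x \<and> h x \<le> f x" unfolding H_def by blast
    thus "y \<le> c" using hh by blast
  qed
  have P_ge: "L f \<le> P f" if "continuous_on UNIV f" "\<forall>x. 0 \<le> f x" for f
    by (rule P_upper[OF that(1) that(1)]) (use that in simp)
  have P_nn: "0 \<le> P f" if "continuous_on UNIV f" "\<forall>x. 0 \<le> f x" for f
    using P_upper[OF that(1), of "\<lambda>x. 0"] that L0 by simp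
  have P_add: "P (\<lambda>x. f x + g x) = P f + P g"
    if f: "continuous_on UNIV f" "\<forall>x. 0 \<le> f x" and g: "continuous_on UNIV g" "\<forall>x. 0 \<le> g x" for f g
  proof (rule antisym)
    have fg: "continuous_on UNIV (\<lambda>x. f x + g x)" "\<forall>x. 0 \<le> f x + g x" using f g by (auto intro: continuous_intros)
    show "P (\<lambda>x. f x + g x) \<le> P f + P g"
    proof (rule P_least[OF fg(2)])
      fix h assume hc: "continuous_on UNIV h" and h: "\<forall>x. 0 \<le> h x \<and> h x \<le> f x + g x"
      define h1 where "h1 = (\<lambda>x. min (h x) (f x))"
      define h2 where "h2 = (\<lambda>x. h x - h1 x)"
      have h1c: "continuous_on UNIV h1" unfolding h1_def using hc f by (intro continuous_intros)
      have h2c: "continuous_on UNIV h2" unfolding h2_def using hc h1c by (intro continuous_intros)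
      have "\<forall>x. 0 \<le> h1 x \<and> h1 x \<le> f x" unfolding h1_def using h f by auto
      hence a: "L h1 \<le> P f" by (rule P_upper[OF f(1) h1c])
      have "\<forall>x. 0 \<le> h2 x \<and> h2 x \<le> g x"
      proof
        fix x show "0 \<le> h2 x \<and> h2 x \<le> g x" unfolding h2_def h1_def
          using h[rule_format, of x] f(2)[rule_format, of x] g(2)[rule_format, of x] by (auto simp: min_def)
      qed
      hence b: "L h2 \<le> P g" by (rule P_upper[OF g(1) h2c])
      have "h = (\<lambda>x. h1 x + h2 x)" unfolding h2_def by simp
      hence "L h = L h1 + L h2" using Ladd[OF h1c h2c] by simp
      thus "L h \<le> P f + P g" using a b by simp
    qed
    show "P f + P g \<le> P (\<lambda>x. f x + g x)"
    proof -
      have "P g \<le> P (\<lambda>x. f x + g x) - P f"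
      proof (rule P_least[OF g(2)])
        fix h2 assume h2c: "continuous_on UNIV h2" and h2: "\<forall>x. 0 \<le> h2 x \<and> h2 x \<le> g x"
        have "P f \<le> P (\<lambda>x. f x + g x) - L h2"
        proof (rule P_least[OF f(2)])
          fix h1 assume h1c: "continuous_on UNIV h1" and h1: "\<forall>x. 0 \<le> h1 x \<and> h1 x \<le> f x"
          have "\<forall>x. 0 \<le> h1 x + h2 x \<and> h1 x + h2 x \<le> f x + g x" using h1 h2 by (auto intro: add_mono)
          hence "L (\<lambda>x. h1 x + h2 x) \<le> P (\<lambda>x. f x + g x)"
            by (intro P_upper[OF fg(1)]) (auto intro: continuous_intros h1c h2c)
          thus "L h1 \<le> P (\<lambda>x. f x + g x) - L h2" using Ladd[OF h1c h2c] by simp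
        qed
        thus "L h2 \<le> P (\<lambda>x. f x + g x) - P f" by simp
      qed
      thus ?thesis by simp
    qed
  qed
  have P_zero: "P (\<lambda>x::'a. 0) = 0"
  proof (rule antisym)
    show "P (\<lambda>x. 0) \<le> 0"
    proof (rule P_least)
      fix h :: "'a \<Rightarrow> real" assume "continuous_on UNIV h" "\<forall>x. 0 \<le> h x \<and> h x \<le> (0::real)"
      hence "\<forall>x. h x = 0" by (meson antisym)
      hence "h = (\<lambda>x. 0)" by (simp add: fun_eq_iff)
      thus "L h \<le> 0" using L0 by simp
    qed simp
    show "0 \<le> P (\<lambda>x. 0)" by (rule P_nn) auto
  qed
  have P_hom: "P (\<lambda>x. c * f x) = c * P f" if f: "continuous_on UNIV f" "\<forall>x. 0 \<le> f x" and c: "c \<ge> 0" for f c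
  proof (cases "c = 0")
    case True thus ?thesis using P_zero by simp
  next
    case False
    hence c0: "c > 0" using c by simp
    have cf: "continuous_on UNIV (\<lambda>x. c * f x)" "\<forall>x. 0 \<le> c * f x" using f c by (auto intro: continuous_intros)
    have "P (\<lambda>x. c * f x) \<le> c * P f"
    proof (rule P_least[OF cf(2)])
      fix h assume hc: "continuous_on UNIV h" and h: "\<forall>x. 0 \<le> h x \<and> h x \<le> c * f x"
      have "\<forall>x. 0 \<le> (1/c) * h x \<and> (1/c) * h x \<le> f x" using h c0 by (auto simp: field_simps)
      moreover have hc': "continuous_on UNIV (\<lambda>x. (1/c) * h x)" using hc by (intro continuous_intros)
      ultimately have "L (\<lambda>x. (1/c) * h x) \<le> P f" using P_upper[OF f(1) hc'] by blast
      moreover have "L (\<lambda>x. (1/c) * h x) = (1/c) * L h" by (rule Lhom[OF hc])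
      ultimately have "(1/c) * L h \<le> P f" by simp
      thus "L h \<le> c * P f" using c0 by (simp add: field_simps)
    qed
    moreover have "c * P f \<le> P (\<lambda>x. c * f x)"
    proof -
      have "P f \<le> P (\<lambda>x. c * f x) / c"
      proof (rule P_least[OF f(2)])
        fix h assume hc: "continuous_on UNIV h" and h: "\<forall>x. 0 \<le> h x \<and> h x \<le> f x"
        have "\<forall>x. 0 \<le> c * h x \<and> c * h x \<le> c * f x" using h c0 by auto
        moreover have hc': "continuous_on UNIV (\<lambda>x. c * h x)" using hc by (intro continuous_intros)
        ultimately have "L (\<lambda>x. c * h x) \<le> P (\<lambda>x. c * f x)" using P_upper[OF cf(1) hc'] by blast
        moreover have "L (\<lambda>x. c * h x) = c * L h" by (rule Lhom[OF hc])
        ultimately show "L h \<le> P (\<lambda>x. c * f x) / c" using c0 by (simp add: field_simps)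
      qed
      thus ?thesis using c0 by (simp add: field_simps)
    qed
    ultimately show ?thesis by simp
  qed
  define pp where "pp f = (\<lambda>x. max (f x) (0::real))" for f :: "'a \<Rightarrow> real"
  define nn where "nn f = (\<lambda>x. max (- f x) (0::real))" for f :: "'a \<Rightarrow> real"
  have ppc: "continuous_on UNIV (pp f)" "\<forall>x. 0 \<le> pp f x" if "continuous_on UNIV f" for f
    unfolding pp_def using that by (auto intro: continuous_intros)
  have nnc: "continuous_on UNIV (nn f)" "\<forall>x. 0 \<le> nn f x" if "continuous_on UNIV f" for f
    unfolding nn_def using that by (auto intro: continuous_intros)
  define L1 where "L1 f = P (pp f) - P (nn f)" for f
  have L1add: "L1 (\<lambda>x. f x + g x) = L1 f + L1 g" if f: "continuous_on UNIV f" and g: "continuous_on UNIV g" for f g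
  proof -
    have fgc: "continuous_on UNIV (\<lambda>x. f x + g x)" using f g by (intro continuous_intros)
    have eq: "(\<lambda>x. pp (\<lambda>x. f x + g x) x + (nn f x + nn g x)) = (\<lambda>x. nn (\<lambda>x. f x + g x) x + (pp f x + pp g x))"
      unfolding pp_def nn_def by (auto simp: max_def)
    have "P (\<lambda>x. pp (\<lambda>x. f x + g x) x + (nn f x + nn g x)) = P (pp (\<lambda>x. f x + g x)) + (P (nn f) + P (nn g))"
      using ppc[OF fgc] nnc[OF f] nnc[OF g]
      by (simp add: P_add continuous_intros add_nonneg_nonneg)
    moreover have "P (\<lambda>x. nn (\<lambda>x. f x + g x) x + (pp f x + pp g x)) = P (nn (\<lambda>x. f x + g x)) + (P (pp f) + P (pp g))"
      using nnc[OF fgc] ppc[OF f] ppc[OF g]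
      by (simp add: P_add continuous_intros add_nonneg_nonneg)
    ultimately show ?thesis unfolding L1_def using eq by simp
  qed
  have L1hom: "L1 (\<lambda>x. c * f x) = c * L1 f" if f: "continuous_on UNIV f" for f c
  proof (cases "c \<ge> 0")
    case True
    have "pp (\<lambda>x. c * f x) = (\<lambda>x. c * pp f x)" "nn (\<lambda>x. c * f x) = (\<lambda>x. c * nn f x)"
      unfolding pp_def nn_def using True by (simp_all add: mm1 mm2)
    thus ?thesis unfolding L1_def using P_hom[OF ppc[OF f] True] P_hom[OF nnc[OF f] True]
      by (simp add: right_diff_distrib)
  next
    case False
    hence c': "-c \<ge> 0" by simp
    have "pp (\<lambda>x. c * f x) = (\<lambda>x. (-c) * nn f x)" "nn (\<lambda>x. c * f x) = (\<lambda>x. (-c) * pp f x)"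
      unfolding pp_def nn_def using False by (simp_all add: mm3 mm4)
    thus ?thesis unfolding L1_def using P_hom[OF ppc[OF f] c'] P_hom[OF nnc[OF f] c']
      by (simp add: algebra_simps)
  qed
  have L1pos: "L1 f = P f" if f: "continuous_on UNIV f" "\<forall>x. 0 \<le> f x" for f
  proof -
    have "pp f = f" "nn f = (\<lambda>x. 0)" unfolding pp_def nn_def using f(2) by (auto simp: fun_eq_iff max_def intro: antisym)
    thus ?thesis unfolding L1_def using P_zero by simp
  qed
  define L2 where "L2 f = L1 f - L f" for f
  have rz1: "rz L1"
  proof
    show "compact (UNIV::'a set)" by (rule cpt)
  qed (auto simp: L1add L1hom L1pos P_nn)
  have rz2: "rz L2"
  proof
    show "compact (UNIV::'a set)" by (rule cpt)
  next
    fix f g :: "'a \<Rightarrow> real" assume "continuous_on UNIV f" "continuous_on UNIV g"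
    thus "L2 (\<lambda>x. f x + g x) = L2 f + L2 g" unfolding L2_def using L1add Ladd by simp
  next
    fix f :: "'a \<Rightarrow> real" and c assume "continuous_on UNIV f"
    thus "L2 (\<lambda>x. c * f x) = c * L2 f" unfolding L2_def using L1hom Lhom by (simp add: algebra_simps)
  next
    fix f :: "'a \<Rightarrow> real" assume "continuous_on UNIV f" "\<forall>x. 0 \<le> f x"
    thus "0 \<le> L2 f" unfolding L2_def using L1pos P_ge by simp
  qed
  have "\<forall>f. continuous_on UNIV f \<longrightarrow> L f = L1 f - L2 f" unfolding L2_def by simp
  thus ?thesis using rz1 rz2 by blast
qed


lemma rsm_integ:
  fixes f :: "'a::t2_space \<Rightarrow> real"
  assumes cpt: "compact (UNIV::'a set)" and r: "rsm (\<mu>::'a sm)" and fc: "continuous_on UNIV f"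
  shows "integrable (fst \<mu>) f" "integrable (snd \<mu>) f"
proof -
  interpret A: rfb "fst \<mu>" using cpt r unfolding rsm_def by unfold_locales auto
  interpret B: rfb "snd \<mu>" using cpt r unfolding rsm_def by unfold_locales auto
  show "integrable (fst \<mu>) f" by (rule A.integ[OF fc])
  show "integrable (snd \<mu>) f" by (rule B.integ[OF fc])
qed

lemma sint_add:
  fixes f g :: "'a::t2_space \<Rightarrow> real"
  assumes cpt: "compact (UNIV::'a set)" and r: "rsm (\<mu>::'a sm)"
    and fc: "continuous_on UNIV f" and gc: "continuous_on UNIV g"
  shows "sint \<mu> (\<lambda>x. f x + g x) = sint \<mu> f + sint \<mu> g"
  using rsm_integ[OF cpt r fc] rsm_integ[OF cpt r gc] unfolding sint_def
  by (simp add: Bochner_Integration.integral_add)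

lemma sint_mult: "sint \<mu> (\<lambda>x. c * f x) = c * sint \<mu> f"
  unfolding sint_def by (simp add: right_diff_distrib)

lemma sint_minus: "sint \<mu> (\<lambda>x. - f x) = - sint \<mu> f"
  unfolding sint_def by simp

lemma sint_zero: "sint \<mu> (\<lambda>x. 0) = 0"
  unfolding sint_def by simp

lemma sint_sum:
  fixes F :: "('a::t2_space \<Rightarrow> real) set"
  assumes cpt: "compact (UNIV::'a set)" and r: "rsm (\<mu>::'a sm)"
    and F: "finite F" and Fc: "\<And>f. f \<in> F \<Longrightarrow> continuous_on UNIV f"
  shows "sint \<mu> (\<lambda>x. \<Sum>f\<in>F. a f * f x) = (\<Sum>f\<in>F. a f * sint \<mu> f)"
  using F Fc
proof (induction F rule: finite_induct)
  case empty thus ?case by (simp add: sint_zero)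
next
  case (insert h F)
  have "sint \<mu> (\<lambda>x. \<Sum>f\<in>insert h F. a f * f x) = sint \<mu> (\<lambda>x. a h * h x + (\<Sum>f\<in>F. a f * f x))"
    using insert.hyps by simp
  also have "\<dots> = sint \<mu> (\<lambda>x. a h * h x) + sint \<mu> (\<lambda>x. \<Sum>f\<in>F. a f * f x)"
    by (rule sint_add[OF cpt r]) (use insert.prems in \<open>auto intro!: continuous_intros\<close>)
  finally show ?case using insert by (simp add: sint_mult)
qed

lemma vp_comb:
  assumes cpt: "compact (UNIV::'a::t2_space set)" and y: "inV (y::'a vp)" and y': "inV y'"
    and ab: "a \<ge> 0" "b \<ge> 0"
  shows "\<exists>z. inV z \<and> (\<forall>f. continuous_on UNIV f \<longrightarrow>
            sint (fst z) f = a * sint (fst y) f + b * sint (fst y') f \<and>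
            sint (snd z) f = a * sint (snd y) f + b * sint (snd y') f) \<and>
          (\<forall>A\<in>sets borel. sval (fst z) A = a * sval (fst y) A + b * sval (fst y') A \<and>
            sval (snd z) A = a * sval (snd y) A + b * sval (snd y') A)"
proof -
  have r: "regular_fin_borel (fst (fst y))" "regular_fin_borel (snd (fst y))"
    "regular_fin_borel (fst (snd y))" "regular_fin_borel (snd (snd y))"
    "regular_fin_borel (fst (fst y'))" "regular_fin_borel (snd (fst y'))"
    "regular_fin_borel (fst (snd y'))" "regular_fin_borel (snd (snd y'))"
    using y y' unfolding inV_def rsm_def by auto
  obtain R1 where R1: "regular_fin_borel R1"
    "\<forall>f. continuous_on UNIV f \<longrightarrow> integral\<^sup>L R1 f = a * integral\<^sup>L (fst (fst y)) f + b * integral\<^sup>L (fst (fst y')) f"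
    "\<forall>A\<in>sets borel. measure R1 A = a * measure (fst (fst y)) A + b * measure (fst (fst y')) A"
    using riesz_comb[OF cpt r(1) r(5) ab] by blast
  obtain R2 where R2: "regular_fin_borel R2"
    "\<forall>f. continuous_on UNIV f \<longrightarrow> integral\<^sup>L R2 f = a * integral\<^sup>L (snd (fst y)) f + b * integral\<^sup>L (snd (fst y')) f"
    "\<forall>A\<in>sets borel. measure R2 A = a * measure (snd (fst y)) A + b * measure (snd (fst y')) A"
    using riesz_comb[OF cpt r(2) r(6) ab] by blast
  obtain R3 where R3: "regular_fin_borel R3"
    "\<forall>f. continuous_on UNIV f \<longrightarrow> integral\<^sup>L R3 f = a * integral\<^sup>L (fst (snd y)) f + b * integral\<^sup>L (fst (snd y')) f"
    "\<forall>A\<in>sets borel. measure R3 A = a * measure (fst (snd y)) A + b * measure (fst (snd y')) A"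
    using riesz_comb[OF cpt r(3) r(7) ab] by blast
  obtain R4 where R4: "regular_fin_borel R4"
    "\<forall>f. continuous_on UNIV f \<longrightarrow> integral\<^sup>L R4 f = a * integral\<^sup>L (snd (snd y)) f + b * integral\<^sup>L (snd (snd y')) f"
    "\<forall>A\<in>sets borel. measure R4 A = a * measure (snd (snd y)) A + b * measure (snd (snd y')) A"
    using riesz_comb[OF cpt r(4) r(8) ab] by blast
  define z where "z = ((R1, R2), (R3, R4))"
  have I: "\<forall>f. continuous_on UNIV f \<longrightarrow>
            sint (fst z) f = a * sint (fst y) f + b * sint (fst y') f \<and>
            sint (snd z) f = a * sint (snd y) f + b * sint (snd y') f"
    unfolding z_def sint_def using R1(2) R2(2) R3(2) R4(2) by (simp add: algebra_simps)
  have Sv: "\<forall>A\<in>sets borel. sval (fst z) A = a * sval (fst y) A + b * sval (fst y') A \<and>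
            sval (snd z) A = a * sval (snd y) A + b * sval (snd y') A"
    unfolding z_def sval_def using R1(3) R2(3) R3(3) R4(3) by (simp add: algebra_simps)
  have "inV z"
  proof -
    have "rsm (fst z)" "rsm (snd z)" unfolding z_def rsm_def using R1 R2 R3 R4 by auto
    moreover have "sval (fst z) UNIV = 0" using Sv y y' unfolding inV_def by simp
    ultimately show ?thesis unfolding inV_def by blast
  qed
  thus ?thesis using I Sv by blast
qed

lemma P_hat:
  assumes "thermo_theory P" "p \<in> P"
  shows "in_hat P p"
  unfolding in_hat_def
proof (intro conjI allI impI)
  show "inV p" using assms unfolding thermo_theory_def by blast
  fix F :: "('a \<Rightarrow> real) set" and e :: real assume "e > 0"
  thus "\<exists>c\<ge>0. \<exists>q\<in>P. \<forall>f\<in>F. \<bar>c * sint (fst q) f - sint (fst p) f\<bar> < e \<and> \<bar>c * sint (snd q) f - sint (snd p) f\<bar> < e"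
    using assms(2) by (intro exI[of _ 1] conjI bexI[of _ p]) auto
qed

lemma hat_scale:
  assumes hy: "in_hat P y" and z: "inV z" and c: "c \<ge> 0"
    and I: "\<And>f. continuous_on UNIV f \<Longrightarrow> sint (fst z) f = c * sint (fst y) f \<and> sint (snd z) f = c * sint (snd y) f"
  shows "in_hat P z"
  unfolding in_hat_def
proof (intro conjI allI impI)
  show "inV z" by (rule z)
  fix F :: "('a \<Rightarrow> real) set" and e :: real
  assume F: "finite F" and Fc: "\<forall>f\<in>F. continuous_on UNIV f" and e: "e > 0"
  show "\<exists>c'\<ge>0. \<exists>p\<in>P. \<forall>f\<in>F. \<bar>c' * sint (fst p) f - sint (fst z) f\<bar> < e \<and> \<bar>c' * sint (snd p) f - sint (snd z) f\<bar> < e"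
  proof (cases "c = 0")
    case True
    obtain c0 p where "p \<in> P" using hy unfolding in_hat_def
      by (metis (no_types, lifting) empty_iff finite.emptyI zero_less_one)
    thus ?thesis using True I Fc e by (intro exI[of _ 0] conjI bexI[of _ p]) auto
  next
    case False
    hence c0: "c > 0" using c by simp
    obtain c' p where cp: "c' \<ge> 0" "p \<in> P" "\<forall>f\<in>F. \<bar>c' * sint (fst p) f - sint (fst y) f\<bar> < e / c \<and> \<bar>c' * sint (snd p) f - sint (snd y) f\<bar> < e / c"
    proof -
      have hy': "\<forall>F e. finite F \<longrightarrow> (\<forall>f\<in>F. continuous_on UNIV f) \<longrightarrow> e > 0 \<longrightarrow>
        (\<exists>c::real. c \<ge> 0 \<and> (\<exists>p\<in>P. \<forall>f\<in>F. \<bar>c * sint (fst p) f - sint (fst y) f\<bar> < e \<and>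
            \<bar>c * sint (snd p) f - sint (snd y) f\<bar> < e))" using hy unfolding in_hat_def by blast
      have "e / c > 0" using e c0 by simp
      from hy'[rule_format, OF F Fc[rule_format] this] show ?thesis using that by blast
    qed
    have "\<forall>f\<in>F. \<bar>(c * c') * sint (fst p) f - sint (fst z) f\<bar> < e \<and> \<bar>(c * c') * sint (snd p) f - sint (snd z) f\<bar> < e"
    proof
      fix f assume f: "f \<in> F"
      have a: "\<bar>(c * c') * sint (fst p) f - sint (fst z) f\<bar> = c * \<bar>c' * sint (fst p) f - sint (fst y) f\<bar>"
        using I[of f] Fc f c0 by (simp add: abs_mult right_diff_distrib[symmetric] mult.assoc)
      have b: "\<bar>(c * c') * sint (snd p) f - sint (snd z) f\<bar> = c * \<bar>c' * sint (snd p) f - sint (snd y) f\<bar>"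
        using I[of f] Fc f c0 by (simp add: abs_mult right_diff_distrib[symmetric] mult.assoc)
      show "\<bar>(c * c') * sint (fst p) f - sint (fst z) f\<bar> < e \<and> \<bar>(c * c') * sint (snd p) f - sint (snd z) f\<bar> < e"
        unfolding a b using cp(3) f c0 by (simp add: field_simps)
    qed
    thus ?thesis using cp c0 by (intro exI[of _ "c * c'"]) auto
  qed
qed

lemma hat_add:
  assumes cpt: "compact (UNIV::'a::t2_space set)" and th: "thermo_theory (P::'a vp set)"
    and h1: "in_hat P y1" and h2: "in_hat P y2"
  shows "\<exists>z. in_hat P z \<and> (\<forall>f. continuous_on UNIV f \<longrightarrow>
     sint (fst z) f = sint (fst y1) f + sint (fst y2) f \<and> sint (snd z) f = sint (snd y1) f + sint (snd y2) f)"
proof -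
  have v1: "inV y1" and v2: "inV y2" using h1 h2 unfolding in_hat_def by auto
  obtain x1 where x1: "inV x1" "\<forall>f. continuous_on UNIV f \<longrightarrow>
            sint (fst x1) f = 2 * sint (fst y1) f + 0 * sint (fst y1) f \<and>
            sint (snd x1) f = 2 * sint (snd y1) f + 0 * sint (snd y1) f"
     "\<forall>A\<in>sets borel. sval (fst x1) A = 2 * sval (fst y1) A + 0 * sval (fst y1) A \<and>
            sval (snd x1) A = 2 * sval (snd y1) A + 0 * sval (snd y1) A"
    using vp_comb[OF cpt v1 v1, of 2 0] by auto
  obtain x2 where x2: "inV x2" "\<forall>f. continuous_on UNIV f \<longrightarrow>
            sint (fst x2) f = 2 * sint (fst y2) f + 0 * sint (fst y2) f \<and>
            sint (snd x2) f = 2 * sint (snd y2) f + 0 * sint (snd y2) f"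
     "\<forall>A\<in>sets borel. sval (fst x2) A = 2 * sval (fst y2) A + 0 * sval (fst y2) A \<and>
            sval (snd x2) A = 2 * sval (snd y2) A + 0 * sval (snd y2) A"
    using vp_comb[OF cpt v2 v2, of 2 0] by auto
  obtain z where z: "inV z" "\<forall>f. continuous_on UNIV f \<longrightarrow>
            sint (fst z) f = 1 * sint (fst y1) f + 1 * sint (fst y2) f \<and>
            sint (snd z) f = 1 * sint (snd y1) f + 1 * sint (snd y2) f"
     "\<forall>A\<in>sets borel. sval (fst z) A = 1 * sval (fst y1) A + 1 * sval (fst y2) A \<and>
            sval (snd z) A = 1 * sval (snd y1) A + 1 * sval (snd y2) A"
    using vp_comb[OF cpt v1 v2, of 1 1] by auto
  have hx1: "in_hat P x1" by (rule hat_scale[OF h1 x1(1), of 2]) (use x1(2) in auto)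
  have hx2: "in_hat P x2" by (rule hat_scale[OF h2 x2(1), of 2]) (use x2(2) in auto)
  have sv: "\<forall>A\<in>sets borel. sval (fst z) A = (1/2) * sval (fst x1) A + (1 - 1/2) * sval (fst x2) A
                      \<and> sval (snd z) A = (1/2) * sval (snd x1) A + (1 - 1/2) * sval (snd x2) A"
    using z(3) x1(3) x2(3) by simp
  have conv: "\<forall>x y z t. in_hat P x \<longrightarrow> in_hat P y \<longrightarrow> inV z \<longrightarrow> 0 \<le> t \<longrightarrow> t \<le> (1::real) \<longrightarrow>
        (\<forall>A\<in>sets borel. sval (fst z) A = t * sval (fst x) A + (1 - t) * sval (fst y) A
                      \<and> sval (snd z) A = t * sval (snd x) A + (1 - t) * sval (snd y) A) \<longrightarrow>
        in_hat P z" using th unfolding thermo_theory_def by blast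
  have "in_hat P z" using spec[OF spec[OF spec[OF spec[OF conv, of x1], of x2], of z], of "1/2"] hx1 hx2 z(1) sv
    by simp
  thus ?thesis using z(2) by (intro exI[of _ z] conjI) simp_all
qed

lemma null_rfb: "regular_fin_borel (null_measure (borel::'a::topological_space measure))"
  unfolding regular_fin_borel_def
proof (intro conjI ballI)
  show "sets (null_measure borel) = sets (borel::'a measure)" by simp
  show "finite_measure (null_measure (borel::'a measure))" by (rule finite_measureI) simp
  fix A :: "'a set" assume "A \<in> sets borel"
  have "{} \<in> {K. compact K \<and> K \<subseteq> A}" by simp
  hence "{K. compact K \<and> K \<subseteq> A} \<noteq> {}" by blast
  thus "emeasure (null_measure borel) A = (SUP K\<in>{K. compact K \<and> K \<subseteq> A}. emeasure (null_measure borel) K)"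
    by simp
  have "{U. open U \<and> A \<subseteq> U} \<noteq> {}" by auto
  thus "emeasure (null_measure borel) A = (INF U\<in>{U. open U \<and> A \<subseteq> U}. emeasure (null_measure borel) U)"
    by simp
qed


lemma fsub_add: "fsubspace W \<Longrightarrow> f \<in> W \<Longrightarrow> g \<in> W \<Longrightarrow> (\<lambda>x. f x + g x) \<in> W"
  unfolding fsubspace_def by blast

lemma fsub_sc: "fsubspace W \<Longrightarrow> f \<in> W \<Longrightarrow> (\<lambda>x. c * f x) \<in> W"
  unfolding fsubspace_def by blast

lemma lin_sum:
  assumes fs: "fsubspace W" and add: "\<forall>f\<in>W. \<forall>g\<in>W. L (\<lambda>x. f x + g x) = L f + L g"
    and hom: "\<forall>f\<in>W. \<forall>c. L (\<lambda>x. c * f x) = c * L f"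
    and z: "z \<in> W" and I: "finite I" and b: "\<And>i. i \<in> I \<Longrightarrow> b i \<in> W"
  shows "(\<lambda>x. \<Sum>i\<in>I. a i * b i x) \<in> W \<and> L (\<lambda>x. \<Sum>i\<in>I. a i * b i x) = (\<Sum>i\<in>I. a i * L (b i))"
  using I b
proof (induction I rule: finite_induct)
  case empty
  have "(\<lambda>x. 0 * z x) \<in> W" by (rule fsub_sc[OF fs z])
  moreover have "L (\<lambda>x. 0 * z x) = 0 * L z" using hom z by blast
  ultimately show ?case by simp
next
  case (insert j I)
  have IH: "(\<lambda>x. \<Sum>i\<in>I. a i * b i x) \<in> W" "L (\<lambda>x. \<Sum>i\<in>I. a i * b i x) = (\<Sum>i\<in>I. a i * L (b i))"
    using insert by auto
  have bj: "b j \<in> W" using insert by auto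
  have aj: "(\<lambda>x. a j * b j x) \<in> W" by (rule fsub_sc[OF fs bj])
  have eq: "(\<lambda>x. \<Sum>i\<in>insert j I. a i * b i x) = (\<lambda>x. a j * b j x + (\<Sum>i\<in>I. a i * b i x))"
    using insert.hyps by simp
  have "(\<lambda>x. a j * b j x + (\<Sum>i\<in>I. a i * b i x)) \<in> W" using fsub_add[OF fs aj IH(1)] by simp
  moreover have "L (\<lambda>x. a j * b j x + (\<Sum>i\<in>I. a i * b i x)) = a j * L (b j) + (\<Sum>i\<in>I. a i * L (b i))"
    using add aj IH hom bj by simp
  ultimately show ?case using eq insert.hyps by simp
qed

lemma hat_limit:
  fixes P :: "('a::t2_space) vp set"
  assumes cpt: "compact (UNIV::'a set)" and th: "thermo_theory P"
    and ne: "\<exists>x. in_hat P x" and x0: "inV x0"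
    and Sp: "\<And>\<eta> g. continuous_on UNIV \<eta> \<Longrightarrow> continuous_on UNIV g \<Longrightarrow>
       (\<forall>p\<in>P. sint (fst p) \<eta> + sint (snd p) g \<le> 0) \<Longrightarrow> sint (fst x0) \<eta> + sint (snd x0) g \<le> 0"
  shows "in_hat P x0"
proof (rule ccontr)
  assume nh: "\<not> in_hat P x0"
  have "\<not> (\<forall>F e. finite F \<longrightarrow> (\<forall>f\<in>F. continuous_on UNIV f) \<longrightarrow> e > 0 \<longrightarrow>
        (\<exists>c::real. c \<ge> 0 \<and> (\<exists>p\<in>P. \<forall>f\<in>F.
            \<bar>c * sint (fst p) f - sint (fst x0) f\<bar> < e \<and>
            \<bar>c * sint (snd p) f - sint (snd x0) f\<bar> < e)))"
    using nh x0 unfolding in_hat_def by blast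
  then obtain F e where F: "finite F" and Fc: "\<forall>f\<in>F. continuous_on UNIV f" and e: "e > (0::real)"
    and H: "\<not> (\<exists>c::real. c \<ge> 0 \<and> (\<exists>p\<in>P. \<forall>f\<in>F.
            \<bar>c * sint (fst p) f - sint (fst x0) f\<bar> < e \<and>
            \<bar>c * sint (snd p) f - sint (snd x0) f\<bar> < e))"
    by blast
  define I where "I = F \<times> (UNIV::bool set)"
  have Ifin: "finite I" unfolding I_def using F by simp
  define W where "W = {v :: ('a \<Rightarrow> real) \<times> bool \<Rightarrow> real. \<forall>i. fst i \<notin> F \<longrightarrow> v i = 0}"
  define u where "u y = (\<lambda>i. if fst i \<in> F then (if snd i then sint (fst y) (fst i) else sint (snd y) (fst i)) else 0)"
    for y :: "'a vp"
  define D where "D = {u y | y. in_hat P y}"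
  have fsW: "fsubspace W" unfolding fsubspace_def W_def by auto
  have bndW: "\<exists>B. \<forall>i. \<bar>v i\<bar> \<le> B" if v: "v \<in> W" for v
  proof (intro exI allI)
    fix i
    show "\<bar>v i\<bar> \<le> (\<Sum>j\<in>I. \<bar>v j\<bar>)"
    proof (cases "i \<in> I")
      case True thus ?thesis by (intro member_le_sum Ifin) auto
    next
      case False
      hence "fst i \<notin> F" unfolding I_def by (cases i) auto
      hence "v i = 0" using v unfolding W_def by blast
      thus ?thesis by (simp add: sum_nonneg)
    qed
  qed
  have uW: "u y \<in> W" for y unfolding W_def u_def by auto
  have DW: "D \<subseteq> W" unfolding D_def using uW by blast
  have inVh: "inV y" if "in_hat P y" for y using that unfolding in_hat_def by blast
  have D0: "(\<lambda>i. 0) \<in> D"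
  proof -
    obtain x1 where x1: "in_hat P x1" using ne by blast
    obtain z where z: "inV z" "\<forall>f. continuous_on UNIV f \<longrightarrow>
            sint (fst z) f = 0 * sint (fst x1) f + 0 * sint (fst x1) f \<and>
            sint (snd z) f = 0 * sint (snd x1) f + 0 * sint (snd x1) f"
      using vp_comb[OF cpt inVh[OF x1] inVh[OF x1], of 0 0] by auto
    have hz: "in_hat P z" by (rule hat_scale[OF x1 z(1), of 0]) (use z(2) in auto)
    have "u z = (\<lambda>i. 0)" unfolding u_def using z(2) Fc by (auto simp: fun_eq_iff)
    thus ?thesis unfolding D_def using hz by (intro CollectI exI[of _ z] conjI) simp_all
  qed
  have Dadd: "(\<lambda>i. w1 i + w2 i) \<in> D" if w1D: "w1 \<in> D" and w2D: "w2 \<in> D" for w1 w2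
  proof -
    obtain y1 where y1: "w1 = u y1" "in_hat P y1" using w1D unfolding D_def by blast
    obtain y2 where y2: "w2 = u y2" "in_hat P y2" using w2D unfolding D_def by blast
    note y = y1(1) y2(1) y1(2) y2(2)
    obtain z where z: "in_hat P z" "\<forall>f. continuous_on UNIV f \<longrightarrow>
     sint (fst z) f = sint (fst y1) f + sint (fst y2) f \<and> sint (snd z) f = sint (snd y1) f + sint (snd y2) f"
      using hat_add[OF cpt th y(3,4)] by blast
    have "u z = (\<lambda>i. w1 i + w2 i)" unfolding y u_def using z(2) Fc by (auto simp: fun_eq_iff)
    thus ?thesis unfolding D_def using z(1) by (intro CollectI exI[of _ z] conjI) simp_all
  qed
  have Dsc: "(\<lambda>i. c * w i) \<in> D" if wD: "w \<in> D" and cc: "c \<ge> 0" for w c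
  proof -
    obtain y where y: "w = u y" "in_hat P y" using wD unfolding D_def by blast
    obtain z where z: "inV z" "\<forall>f. continuous_on UNIV f \<longrightarrow>
            sint (fst z) f = c * sint (fst y) f + 0 * sint (fst y) f \<and>
            sint (snd z) f = c * sint (snd y) f + 0 * sint (snd y) f"
      using vp_comb[OF cpt inVh[OF y(2)] inVh[OF y(2)] cc, of 0] by auto
    have hz: "in_hat P z" by (rule hat_scale[OF y(2) z(1) cc]) (use z(2) in auto)
    have "u z = (\<lambda>i. c * w i)" unfolding y u_def using z(2) Fc by (auto simp: fun_eq_iff)
    thus ?thesis unfolding D_def using hz by (intro CollectI exI[of _ z] conjI) simp_all
  qed
  define z0 where "z0 = u x0"
  have far: "\<exists>i. e / 2 < \<bar>z0 i - w i\<bar>" if w: "w \<in> D" for w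
  proof (rule ccontr)
    assume "\<not> (\<exists>i. e / 2 < \<bar>z0 i - w i\<bar>)"
    hence close: "\<And>i. \<bar>z0 i - w i\<bar> \<le> e / 2" by (meson not_less)
    obtain y where y: "w = u y" "in_hat P y" using w unfolding D_def by blast
    have hy': "\<forall>F e. finite F \<longrightarrow> (\<forall>f\<in>F. continuous_on UNIV f) \<longrightarrow> e > 0 \<longrightarrow>
        (\<exists>c::real. c \<ge> 0 \<and> (\<exists>p\<in>P. \<forall>f\<in>F. \<bar>c * sint (fst p) f - sint (fst y) f\<bar> < e \<and>
            \<bar>c * sint (snd p) f - sint (snd y) f\<bar> < e))" using y(2) unfolding in_hat_def by blast
    have "e / 2 > 0" using e by simp
    from hy'[rule_format, OF F Fc[rule_format] this]
    obtain c p where cp: "c \<ge> 0" "p \<in> P" "\<forall>f\<in>F. \<bar>c * sint (fst p) f - sint (fst y) f\<bar> < e / 2 \<and>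
            \<bar>c * sint (snd p) f - sint (snd y) f\<bar> < e / 2" by blast
    have "\<forall>f\<in>F. \<bar>c * sint (fst p) f - sint (fst x0) f\<bar> < e \<and> \<bar>c * sint (snd p) f - sint (snd x0) f\<bar> < e"
    proof
      fix f assume f: "f \<in> F"
      have a: "\<bar>sint (fst x0) f - sint (fst y) f\<bar> \<le> e / 2" using close[of "(f, True)"] f unfolding z0_def y(1) u_def by simp
      have b: "\<bar>sint (snd x0) f - sint (snd y) f\<bar> \<le> e / 2" using close[of "(f, False)"] f unfolding z0_def y(1) u_def by simp
      show "\<bar>c * sint (fst p) f - sint (fst x0) f\<bar> < e \<and> \<bar>c * sint (snd p) f - sint (snd x0) f\<bar> < e"
      proof -
        have c1: "\<bar>c * sint (fst p) f - sint (fst y) f\<bar> < e / 2" "\<bar>c * sint (snd p) f - sint (snd y) f\<bar> < e / 2"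
          using cp(3) f by auto
        show ?thesis using a b c1 by linarith
      qed
    qed
    thus False using H cp(1,2) by blast
  qed
  have z0W: "z0 \<in> W" unfolding z0_def by (rule uW)
  have "e / 2 > 0" using e by simp
  from sep_cone[OF fsW bndW DW D0 Dadd Dsc z0W this far]
  obtain L where L: "\<forall>f\<in>W. \<forall>g\<in>W. L (\<lambda>x. f x + g x) = L f + L g" "\<forall>f\<in>W. \<forall>c. L (\<lambda>x. c * f x) = c * L f"
           "\<forall>w\<in>D. L w \<le> 0" "L z0 \<ge> e / 2" by blast
  define ev where "ev i = (\<lambda>j. if j = i then 1 else (0::real))" for i :: "('a \<Rightarrow> real) \<times> bool"
  have evW: "ev i \<in> W" if "i \<in> I" for i using that unfolding ev_def W_def I_def by auto
  have rep: "L v = (\<Sum>i\<in>I. v i * L (ev i))" if v: "v \<in> W" for v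
  proof -
    have "v = (\<lambda>j. \<Sum>i\<in>I. v i * ev i j)"
    proof
      fix j
      show "v j = (\<Sum>i\<in>I. v i * ev i j)"
      proof (cases "j \<in> I")
        case True
        have "(\<Sum>i\<in>I. v i * ev i j) = (\<Sum>i\<in>I. if i = j then v j else 0)"
          by (rule sum.cong) (auto simp: ev_def)
        also have "\<dots> = v j" using True Ifin by simp
        finally show ?thesis by simp
      next
        case False
        hence "fst j \<notin> F" unfolding I_def by (cases j) auto
        hence "v j = 0" using v unfolding W_def by blast
        moreover have "(\<Sum>i\<in>I. v i * ev i j) = 0" using False by (intro sum.neutral) (auto simp: ev_def)
        ultimately show ?thesis by simp
      qed
    qed
    hence "L v = L (\<lambda>j. \<Sum>i\<in>I. v i * ev i j)" by simp
    also have "\<dots> = (\<Sum>i\<in>I. v i * L (ev i))"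
      using lin_sum[OF fsW L(1) L(2) z0W Ifin, where a=v and b=ev] evW by blast
    finally show ?thesis .
  qed
  define \<alpha> where "\<alpha> f = L (ev (f, True))" for f
  define \<beta> where "\<beta> f = L (ev (f, False))" for f
  define \<eta> where "\<eta> = (\<lambda>x. \<Sum>f\<in>F. \<alpha> f * f x)"
  define g where "g = (\<lambda>x. \<Sum>f\<in>F. \<beta> f * f x)"
  have \<eta>c: "continuous_on UNIV \<eta>" unfolding \<eta>_def using Fc by (intro continuous_intros) auto
  have gc: "continuous_on UNIV g" unfolding g_def using Fc by (intro continuous_intros) auto
  have uval: "L (u y) = sint (fst y) \<eta> + sint (snd y) g" if y: "inV y" for y
  proof -
    have "L (u y) = (\<Sum>i\<in>I. u y i * L (ev i))" by (rule rep[OF uW])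
    also have "\<dots> = (\<Sum>f\<in>F. \<Sum>b\<in>UNIV. u y (f, b) * L (ev (f, b)))"
      unfolding I_def by (simp add: sum.cartesian_product)
    also have "\<dots> = (\<Sum>f\<in>F. \<alpha> f * sint (fst y) f + \<beta> f * sint (snd y) f)"
      by (rule sum.cong) (auto simp: UNIV_bool u_def \<alpha>_def \<beta>_def)
    also have "\<dots> = (\<Sum>f\<in>F. \<alpha> f * sint (fst y) f) + (\<Sum>f\<in>F. \<beta> f * sint (snd y) f)"
      by (simp add: sum.distrib)
    also have "\<dots> = sint (fst y) \<eta> + sint (snd y) g"
      unfolding \<eta>_def g_def using y Fc
      by (simp add: sint_sum[OF cpt _ F] inV_def)
    finally show ?thesis .
  qed
  have "\<forall>p\<in>P. sint (fst p) \<eta> + sint (snd p) g \<le> 0"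
  proof
    fix p assume p: "p \<in> P"
    have hp: "in_hat P p" by (rule P_hat[OF th p])
    hence "u p \<in> D" unfolding D_def by blast
    hence "L (u p) \<le> 0" using L(3) by blast
    thus "sint (fst p) \<eta> + sint (snd p) g \<le> 0" using uval[OF inVh[OF hp]] by simp
  qed
  hence "sint (fst x0) \<eta> + sint (snd x0) g \<le> 0" by (rule Sp[OF \<eta>c gc])
  hence "L z0 \<le> 0" unfolding z0_def using uval[OF x0] by simp
  thus False using L(4) e by simp
qed


theorem theoremD1:
  fixes P :: "('a::t2_space) vp set"
  assumes "compact (UNIV :: 'a set)"
    and "kelvin_planck P"
    and "strong_clausius P T"
    and "\<epsilon> > 0"
  shows "\<exists>T'. clausius_duhem P T' \<and> (\<forall>s. \<bar>T' s - T s\<bar> < \<epsilon>)"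
proof -
  note cpt = assms(1)
  have th: "thermo_theory P" and ne: "\<exists>x. in_hat P x" using assms(2) unfolding kelvin_planck_def by blast+
  have Tc: "continuous_on UNIV T" and Tp: "\<forall>s. T s > 0"
    and SC: "\<forall>x. in_hat P x \<longrightarrow> (\<forall>A\<in>sets borel. sval (fst x) A = 0) \<longrightarrow> sint (snd x) (\<lambda>s. 1 / T s) \<le> 0"
    using assms(3) unfolding strong_clausius_def by blast+
  obtain TM where TM: "\<forall>s. \<bar>T s\<bar> \<le> TM" using cont_bnd[OF cpt Tc] by blast
  have TMs: "T s \<le> TM" for s using TM by (metis abs_ge_self order_trans)
  have TM0: "TM > 0" using TMs[of undefined] Tp by (meson less_le_trans)
  define \<delta> where "\<delta> = min (1 / (2 * TM)) (\<epsilon> / (4 * TM^2))"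
  have \<delta>0: "\<delta> > 0" unfolding \<delta>_def using TM0 assms(4) by simp
  have rsmP: "rsm (fst p) \<and> rsm (snd p)" if "p \<in> P" for p
    using th that unfolding thermo_theory_def inV_def by blast
  have KC: "\<exists>\<eta> g. continuous_on UNIV \<eta> \<and> continuous_on UNIV g \<and> (\<forall>x. \<bar>g x + 1 / T x\<bar> \<le> \<delta>) \<and>
     (\<forall>p\<in>P. 0 \<le> sint (fst p) \<eta> + sint (snd p) g)"
  proof (rule ccontr)
    assume nKC: "\<not> ?thesis"
    define S where "S = {g. continuous_on UNIV g \<and> (\<exists>\<eta>. continuous_on UNIV \<eta> \<and> (\<forall>p\<in>P. 0 \<le> sint (fst p) \<eta> + sint (snd p) g))}"
    define V where "V = {f::'a \<Rightarrow> real. continuous_on UNIV f}"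
    have fsV: "fsubspace V" unfolding fsubspace_def V_def by (auto intro: continuous_intros)
    have bndV: "\<exists>B. \<forall>x. \<bar>v x\<bar> \<le> B" if "v \<in> V" for v using cont_bnd[OF cpt] that unfolding V_def by blast
    have SV: "S \<subseteq> V" unfolding S_def V_def by blast
    have S0: "(\<lambda>x. 0) \<in> S" unfolding S_def
      by (intro CollectI conjI exI[of _ "\<lambda>x. 0"]) (auto simp: sint_zero)
    have Sadd: "(\<lambda>x. w1 x + w2 x) \<in> S" if w1S: "w1 \<in> S" and w2S: "w2 \<in> S" for w1 w2
    proof -
      obtain \<eta>1 where e1: "continuous_on UNIV w1" "continuous_on UNIV \<eta>1" "\<forall>p\<in>P. 0 \<le> sint (fst p) \<eta>1 + sint (snd p) w1"
        using w1S unfolding S_def by blast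
      obtain \<eta>2 where e2: "continuous_on UNIV w2" "continuous_on UNIV \<eta>2" "\<forall>p\<in>P. 0 \<le> sint (fst p) \<eta>2 + sint (snd p) w2"
        using w2S unfolding S_def by blast
      have "\<forall>p\<in>P. 0 \<le> sint (fst p) (\<lambda>x. \<eta>1 x + \<eta>2 x) + sint (snd p) (\<lambda>x. w1 x + w2 x)"
      proof
        fix p assume p: "p \<in> P"
        have "sint (fst p) (\<lambda>x. \<eta>1 x + \<eta>2 x) = sint (fst p) \<eta>1 + sint (fst p) \<eta>2"
          using sint_add[OF cpt _ e1(2) e2(2)] rsmP[OF p] by blast
        moreover have "sint (snd p) (\<lambda>x. w1 x + w2 x) = sint (snd p) w1 + sint (snd p) w2"
          using sint_add[OF cpt _ e1(1) e2(1)] rsmP[OF p] by blast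
        ultimately show "0 \<le> sint (fst p) (\<lambda>x. \<eta>1 x + \<eta>2 x) + sint (snd p) (\<lambda>x. w1 x + w2 x)"
          using e1(3) e2(3) p by fastforce
      qed
      thus ?thesis unfolding S_def using e1 e2
        by (intro CollectI conjI exI[of _ "\<lambda>x. \<eta>1 x + \<eta>2 x"]) (auto intro: continuous_intros)
    qed
    have Ssc: "(\<lambda>x. c * w x) \<in> S" if wS: "w \<in> S" and c: "c \<ge> 0" for w c
    proof -
      obtain \<eta>1 where e1: "continuous_on UNIV w" "continuous_on UNIV \<eta>1" "\<forall>p\<in>P. 0 \<le> sint (fst p) \<eta>1 + sint (snd p) w"
        using wS unfolding S_def by blast
      have "\<forall>p\<in>P. 0 \<le> sint (fst p) (\<lambda>x. c * \<eta>1 x) + sint (snd p) (\<lambda>x. c * w x)"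
      proof
        fix p assume p: "p \<in> P"
        have "sint (fst p) (\<lambda>x. c * \<eta>1 x) + sint (snd p) (\<lambda>x. c * w x) = c * (sint (fst p) \<eta>1 + sint (snd p) w)"
          by (simp add: sint_mult algebra_simps)
        thus "0 \<le> sint (fst p) (\<lambda>x. c * \<eta>1 x) + sint (snd p) (\<lambda>x. c * w x)" using e1(3) p c by simp
      qed
      thus ?thesis unfolding S_def using e1
        by (intro CollectI conjI exI[of _ "\<lambda>x. c * \<eta>1 x"]) (auto intro: continuous_intros)
    qed
    define g0 where "g0 = (\<lambda>x. - (1 / T x))"
    have g0c: "continuous_on UNIV g0" unfolding g0_def using Tc Tp
      by (intro continuous_intros) (auto simp: less_imp_neq[symmetric])
    have g0V: "g0 \<in> V" unfolding V_def using g0c by simp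
    have far: "\<exists>x. \<delta> < \<bar>g0 x - w x\<bar>" if wS: "w \<in> S" for w
    proof (rule ccontr)
      assume "\<not> (\<exists>x. \<delta> < \<bar>g0 x - w x\<bar>)"
      hence "\<forall>x. \<bar>w x + 1 / T x\<bar> \<le> \<delta>" unfolding g0_def by (auto simp: not_less abs_minus_commute)
      moreover obtain \<eta> where "continuous_on UNIV w" "continuous_on UNIV \<eta>" "\<forall>p\<in>P. 0 \<le> sint (fst p) \<eta> + sint (snd p) w"
        using wS unfolding S_def by blast
      ultimately show False using nKC by blast
    qed
    from sep_cone[OF fsV bndV SV S0 Sadd Ssc g0V \<delta>0 far]
    obtain L where L: "\<forall>f\<in>V. \<forall>g\<in>V. L (\<lambda>x. f x + g x) = L f + L g" "\<forall>f\<in>V. \<forall>c. L (\<lambda>x. c * f x) = c * L f"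
       "\<forall>w\<in>S. L w \<le> 0" "L g0 \<ge> \<delta>" "\<forall>v\<in>V. \<forall>B. (\<forall>x. \<bar>v x\<bar> \<le> B) \<longrightarrow> L v \<le> B" by blast
    have Ladd: "\<And>f g. continuous_on UNIV f \<Longrightarrow> continuous_on UNIV g \<Longrightarrow> L (\<lambda>x. f x + g x) = L f + L g"
      using L(1) unfolding V_def by blast
    have Lhom: "\<And>f c. continuous_on UNIV f \<Longrightarrow> L (\<lambda>x. c * f x) = c * L f"
      using L(2) unfolding V_def by blast
    have Lbnd: "\<And>f B. continuous_on UNIV f \<Longrightarrow> (\<forall>x. \<bar>f x\<bar> \<le> B) \<Longrightarrow> L f \<le> B"
      using L(5) unfolding V_def by blast
    obtain L1 L2 where J: "rz L1" "rz L2" "\<forall>f. continuous_on UNIV f \<longrightarrow> L f = L1 f - L2 f"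
      using jordan[where L=L, OF cpt Ladd Lhom Lbnd] by blast
    obtain M1 where M1: "regular_fin_borel M1" "\<forall>f. continuous_on UNIV f \<longrightarrow> integral\<^sup>L M1 f = L1 f"
      using rz.riesz[OF J(1)] by blast
    obtain M2 where M2: "regular_fin_borel M2" "\<forall>f. continuous_on UNIV f \<longrightarrow> integral\<^sup>L M2 f = L2 f"
      using rz.riesz[OF J(2)] by blast
    define x0 :: "'a vp" where "x0 = ((null_measure borel, null_measure borel), (M2, M1))"
    have x0V: "inV x0" unfolding x0_def inV_def rsm_def sval_def using null_rfb M1(1) M2(1) by simp
    have s1: "sint (fst x0) f = 0" for f unfolding x0_def sint_def by simp
    have s2: "sint (snd x0) f = - L f" if "continuous_on UNIV f" for f
      unfolding x0_def sint_def using M1(2) M2(2) J(3) that by simp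
    have hx0: "in_hat P x0"
    proof (rule hat_limit[OF cpt th ne x0V])
      fix \<eta> g :: "'a \<Rightarrow> real"
      assume \<eta>c: "continuous_on UNIV \<eta>" and gc: "continuous_on UNIV g"
        and hp: "\<forall>p\<in>P. sint (fst p) \<eta> + sint (snd p) g \<le> 0"
      have "(\<lambda>x. (-1) * g x) \<in> S" unfolding S_def
      proof (intro CollectI conjI exI[of _ "\<lambda>x. (-1) * \<eta> x"] ballI)
        show "continuous_on UNIV (\<lambda>x. (-1) * g x)" using gc by (intro continuous_intros)
        show "continuous_on UNIV (\<lambda>x. (-1) * \<eta> x)" using \<eta>c by (intro continuous_intros)
        fix p assume pP: "p \<in> P"
        have "sint (fst p) (\<lambda>x. (-1) * \<eta> x) + sint (snd p) (\<lambda>x. (-1) * g x) = - (sint (fst p) \<eta> + sint (snd p) g)"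
          by (simp only: sint_mult)
        moreover have "sint (fst p) \<eta> + sint (snd p) g \<le> 0" using hp pP by blast
        ultimately show "0 \<le> sint (fst p) (\<lambda>x. (-1) * \<eta> x) + sint (snd p) (\<lambda>x. (-1) * g x)"
          by linarith
      qed
      hence "L (\<lambda>x. (-1) * g x) \<le> 0" using L(3) by blast
      hence "0 \<le> L g" using Lhom[OF gc, of "-1"] by simp
      thus "sint (fst x0) \<eta> + sint (snd x0) g \<le> 0" using s1 s2[OF gc] by simp
    qed
    have "\<forall>A\<in>sets borel. sval (fst x0) A = 0" unfolding x0_def sval_def by simp
    hence le: "sint (snd x0) (\<lambda>s. 1 / T s) \<le> 0" using SC hx0 by blast
    have iTc: "continuous_on UNIV (\<lambda>s. 1 / T s)" using Tc Tp
      by (intro continuous_intros) (auto simp: less_imp_neq[symmetric])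
    have "L g0 = L (\<lambda>x. (-1) * (1 / T x))" unfolding g0_def by simp
    also have "\<dots> = - L (\<lambda>s. 1 / T s)" using Lhom[OF iTc, of "-1"] by simp
    also have "\<dots> = sint (snd x0) (\<lambda>s. 1 / T s)" using s2[OF iTc] by simp
    finally have "L g0 \<le> 0" using le by simp
    thus False using L(4) \<delta>0 by simp
  qed
  then obtain \<eta> g where \<eta>c: "continuous_on UNIV \<eta>" and gc: "continuous_on UNIV g"
    and gd: "\<forall>x. \<bar>g x + 1 / T x\<bar> \<le> \<delta>" and ineq: "\<forall>p\<in>P. 0 \<le> sint (fst p) \<eta> + sint (snd p) g" by blast
  have vlow: "1 / TM \<le> 1 / T s" for s using TMs[of s] Tp by (simp add: frac_le)
  have gneg: "g s \<le> - (1 / (2 * TM))" for s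
  proof -
    have "g s + 1 / T s \<le> \<delta>" using gd by (meson abs_le_D1)
    moreover have "\<delta> \<le> 1 / (2 * TM)" unfolding \<delta>_def by simp
    moreover have "1 / TM = 1 / (2 * TM) + 1 / (2 * TM)" using TM0 by (simp add: field_simps)
    ultimately show ?thesis using vlow[of s] by linarith
  qed
  have gne: "g s \<noteq> 0" for s using gneg[of s] TM0 by (smt (verit) divide_pos_pos)
  define T' where "T' = (\<lambda>s. - 1 / g s)"
  have T'c: "continuous_on UNIV T'" unfolding T'_def using gc gne by (intro continuous_intros) auto
  have T'p: "\<forall>s. T' s > 0" unfolding T'_def using gneg TM0
    by (smt (verit) divide_neg_neg divide_pos_pos)
  have cd: "clausius_duhem P T'" unfolding clausius_duhem_def
  proof (intro conjI exI[of _ \<eta>] ballI)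
    show "continuous_on UNIV T'" by (rule T'c)
    show "\<forall>s. T' s > 0" by (rule T'p)
    show "continuous_on UNIV \<eta>" by (rule \<eta>c)
    fix p assume p: "p \<in> P"
    have "(\<lambda>s. 1 / T' s) = (\<lambda>s. - g s)" unfolding T'_def using gne by (auto simp: fun_eq_iff)
    hence "sint (snd p) (\<lambda>s. 1 / T' s) = - sint (snd p) g" by (simp add: sint_minus)
    moreover have "0 \<le> sint (fst p) \<eta> + sint (snd p) g" using ineq p by blast
    ultimately show "sint (snd p) (\<lambda>s. 1 / T' s) \<le> sint (fst p) \<eta>" by linarith
  qed
  have close: "\<bar>T' s - T s\<bar> < \<epsilon>" for s
  proof -
    define u where "u = - g s"
    define v where "v = 1 / T s"
    have u: "u \<ge> 1 / (2 * TM)" unfolding u_def using gneg[of s] by simp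
    have v: "v \<ge> 1 / TM" unfolding v_def by (rule vlow)
    have u0: "u > 0" using u TM0 by (smt (verit) divide_pos_pos)
    have v0: "v > 0" using v TM0 by (smt (verit) divide_pos_pos)
    have uv: "\<bar>v - u\<bar> \<le> \<delta>" unfolding u_def v_def using gd by (simp add: add.commute)
    have T's: "T' s = 1 / u" unfolding T'_def u_def by simp
    have Ts: "T s = 1 / v" unfolding v_def using Tp by simp
    have eq: "\<bar>T' s - T s\<bar> = \<bar>v - u\<bar> / (u * v)" unfolding T's Ts using u0 v0
      by (simp add: field_simps abs_div abs_mult)
    have prod: "u * v \<ge> 1 / (2 * TM^2)"
    proof -
      have "u * v \<ge> (1 / (2 * TM)) * (1 / TM)" using u v TM0 u0 by (intro mult_mono) auto
      thus ?thesis by (simp add: power2_eq_square)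
    qed
    have "\<bar>v - u\<bar> / (u * v) \<le> \<delta> / (1 / (2 * TM^2))"
      using uv prod u0 v0 TM0 by (intro frac_le) auto
    also have "\<dots> = \<delta> * (2 * TM^2)" by simp
    also have "\<dots> \<le> (\<epsilon> / (4 * TM^2)) * (2 * TM^2)" unfolding \<delta>_def using TM0 by (intro mult_right_mono) auto
    also have "\<dots> = \<epsilon> / 2" using TM0 by (simp add: field_simps)
    also have "\<dots> < \<epsilon>" using assms(4) by simp
    finally show ?thesis using eq by simp
  qed
  show ?thesis using cd close by blast
qed


end
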